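(* Let $M=\mathcal{O}_{\lambda,\mathbf p}(M_2(\Bbbk))$ with $\lambda^2\ne 1$, and assume $p_{12}$ and $\lambda p_{21}$ are roots of unity whose orders $\operatorname{ord}(p_{12})$ and $\operatorname{ord}(\lambda p_{21})$ are relatively prime. Let $\ell=\operatorname{lcm}(\operatorname{ord}(p_{12}),\operatorname{ord}(\lambda p_{21}))$ and $y_{ij}=x_{ij}^\ell$ for $i,j\in\{1,2\}$. Then the center of $M$ is the polynomial ring $Z(M)=\Bbbk[y_{11},y_{12},y_{21},y_{22}]$.
   Context: $\Bbbk$ is an algebraically closed field of characteristic zero, $\lambda,p_{12}\in\Bbbk^\times$, $p_{21}=p_{12}^{-1}$. $\mathcal{O}_{\lambda,\mathbf p}(M_2(\Bbbk))$ is the $\Bbbk$-algebra generated by $x_{11},x_{12},x_{21},x_{22}$ with relations $x_{12}x_{11}=p_{12}x_{11}x_{12}$, $x_{21}x_{11}=\lambda p_{21}x_{11}x_{21}$, $x_{22}x_{12}=\lambda p_{21}x_{12}x_{22}$, $x_{22}x_{21}=p_{12}x_{21}x_{22}$, $x_{21}x_{12}=\lambda p_{21}^2x_{12}x_{21}$, $x_{22}x_{11}=x_{11}x_{22}+(\lambda-1)p_{21}x_{12}x_{21}$. For $\alpha\in\Bbbk^\times$, $\operatorname{ord}(\alpha)$ is its order in the multiplicative group $\Bbbk^\times$. *)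

theory Defs
  imports "HOL-Computational_Algebra.Polynomial"
begin

datatype gen = X11 | X12 | X21 | X22

text \<open>Free associative algebra over 'k on the generators: coefficient functions on words
  (elements of the free algebra are the finitely supported ones).\<close>
type_synonym 'k falg = "gen list \<Rightarrow> 'k"

definition fin_supp :: "'k::zero falg \<Rightarrow> bool" where
  "fin_supp f \<longleftrightarrow> finite {w. f w \<noteq> 0}"

definition fa_mult :: "'k::comm_ring_1 falg \<Rightarrow> 'k falg \<Rightarrow> 'k falg" where
  "fa_mult f g = (\<lambda>w. \<Sum>i\<le>length w. f (take i w) * g (drop i w))"

definition fa_word :: "gen list \<Rightarrow> 'k::comm_ring_1 falg" where
  "fa_word u = (\<lambda>w. if w = u then 1 else 0)"

definition fa_one :: "'k::comm_ring_1 falg" where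
  "fa_one = fa_word []"

definition fa_gen :: "gen \<Rightarrow> 'k::comm_ring_1 falg" where
  "fa_gen a = fa_word [a]"

definition fa_pow :: "'k::comm_ring_1 falg \<Rightarrow> nat \<Rightarrow> 'k falg" where
  "fa_pow f n = ((fa_mult f) ^^ n) fa_one"

definition fa_smult :: "'k::comm_ring_1 \<Rightarrow> 'k falg \<Rightarrow> 'k falg" where
  "fa_smult c f = (\<lambda>w. c * f w)"

definition fa_add :: "'k::comm_ring_1 falg \<Rightarrow> 'k falg \<Rightarrow> 'k falg" where
  "fa_add f g = (\<lambda>w. f w + g w)"

definition fa_diff :: "'k::comm_ring_1 falg \<Rightarrow> 'k falg \<Rightarrow> 'k falg" where
  "fa_diff f g = (\<lambda>w. f w - g w)"

text \<open>Defining relations of O_{lambda,p}(M_2(k)), with p21 = p12^{-1},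
  each written as (lhs - rhs).\<close>
definition qm_rels :: "'k::field \<Rightarrow> 'k \<Rightarrow> 'k falg set" where
  "qm_rels lam p12 = (let p21 = inverse p12; x = fa_gen; m = fa_mult in
     { fa_diff (m (x X12) (x X11)) (fa_smult p12 (m (x X11) (x X12))),
       fa_diff (m (x X21) (x X11)) (fa_smult (lam * p21) (m (x X11) (x X21))),
       fa_diff (m (x X22) (x X12)) (fa_smult (lam * p21) (m (x X12) (x X22))),
       fa_diff (m (x X22) (x X21)) (fa_smult p12 (m (x X21) (x X22))),
       fa_diff (m (x X21) (x X12)) (fa_smult (lam * p21^2) (m (x X12) (x X21))),
       fa_diff (m (x X22) (x X11))
          (fa_add (m (x X11) (x X22)) (fa_smult ((lam - 1) * p21) (m (x X12) (x X21)))) })"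

inductive qm_ideal :: "'k::field \<Rightarrow> 'k \<Rightarrow> 'k falg \<Rightarrow> bool" for lam p12 where
  zero: "qm_ideal lam p12 (\<lambda>w. 0)"
| gen: "r \<in> qm_rels lam p12 \<Longrightarrow>
          qm_ideal lam p12 (fa_smult c (fa_mult (fa_word u) (fa_mult r (fa_word v))))"
| add: "qm_ideal lam p12 f \<Longrightarrow> qm_ideal lam p12 g \<Longrightarrow> qm_ideal lam p12 (fa_add f g)"

text \<open>Equality in M = free algebra / ideal.\<close>
definition qm_eq :: "'k::field \<Rightarrow> 'k \<Rightarrow> 'k falg \<Rightarrow> 'k falg \<Rightarrow> bool" where
  "qm_eq lam p12 f g \<longleftrightarrow> qm_ideal lam p12 (fa_diff f g)"

definition qm_central :: "'k::field \<Rightarrow> 'k \<Rightarrow> 'k falg \<Rightarrow> bool" where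
  "qm_central lam p12 f \<longleftrightarrow>
     (\<forall>g. fin_supp g \<longrightarrow> qm_eq lam p12 (fa_mult f g) (fa_mult g f))"

definition mord :: "'k::field \<Rightarrow> nat" where
  "mord a = (LEAST n. 0 < n \<and> a ^ n = 1)"

definition ymon :: "nat \<Rightarrow> nat \<times> nat \<times> nat \<times> nat \<Rightarrow> 'k::comm_ring_1 falg" where
  "ymon l m = (case m of (a, b, c, d) \<Rightarrow>
      fa_mult (fa_pow (fa_pow (fa_gen X11) l) a)
       (fa_mult (fa_pow (fa_pow (fa_gen X12) l) b)
        (fa_mult (fa_pow (fa_pow (fa_gen X21) l) c) (fa_pow (fa_pow (fa_gen X22) l) d))))"

definition ycomb :: "nat \<Rightarrow> (nat \<times> nat \<times> nat \<times> nat) set \<Rightarrow> (nat \<times> nat \<times> nat \<times> nat \<Rightarrow> 'k)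
    \<Rightarrow> 'k::comm_ring_1 falg" where
  "ycomb l S c = (\<lambda>w. \<Sum>m\<in>S. c m * ymon l m w)"

end

theory Submission
  imports Defs
begin


type_synonym 'k vec = "nat \<times> nat \<times> nat \<times> nat \<Rightarrow> 'k"

definition kap :: "'k::field \<Rightarrow> 'k \<Rightarrow> nat \<Rightarrow> 'k" where
  "kap q r n = ((q*r)^n - 1) / q"

definition Aop :: "'k::field \<Rightarrow> 'k \<Rightarrow> gen \<Rightarrow> 'k vec \<Rightarrow> 'k vec" where
 "Aop q r g v = (\<lambda>(a,b,c,d). case g of
   X11 \<Rightarrow> (case a of 0 \<Rightarrow> 0 | Suc a' \<Rightarrow> v(a',b,c,d))
 | X12 \<Rightarrow> (case b of 0 \<Rightarrow> 0 | Suc b' \<Rightarrow> q^a * v(a,b',c,d))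
 | X21 \<Rightarrow> (case c of 0 \<Rightarrow> 0 | Suc c' \<Rightarrow> r^a * (r/q)^b * v(a,b,c',d))
 | X22 \<Rightarrow> (case d of 0 \<Rightarrow> 0 | Suc d' \<Rightarrow> r^b*q^c*v(a,b,c,d'))
      + (case b of 0 \<Rightarrow> 0 | Suc b' \<Rightarrow> (case c of 0 \<Rightarrow> 0 | Suc c' \<Rightarrow>
            kap q r (a+1) * (r/q)^b' * v(a+1,b',c',d))))"

definition Rop :: "'k::field \<Rightarrow> 'k \<Rightarrow> gen \<Rightarrow> 'k vec \<Rightarrow> 'k vec" where
 "Rop q r g v = (\<lambda>(a,b,c,d). case g of
   X11 \<Rightarrow> (case a of 0 \<Rightarrow> 0 | Suc a' \<Rightarrow> q^b*r^c*v(a',b,c,d))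
      + (case b of 0 \<Rightarrow> 0 | Suc b' \<Rightarrow> (case c of 0 \<Rightarrow> 0 | Suc c' \<Rightarrow>
            kap q r (d+1) * (r/q)^c' * v(a,b',c',d+1)))
 | X12 \<Rightarrow> (case b of 0 \<Rightarrow> 0 | Suc b' \<Rightarrow> r^d * (r/q)^c * v(a,b',c,d))
 | X21 \<Rightarrow> (case c of 0 \<Rightarrow> 0 | Suc c' \<Rightarrow> q^d * v(a,b,c',d))
 | X22 \<Rightarrow> (case d of 0 \<Rightarrow> 0 | Suc d' \<Rightarrow> v(a,b,c,d')))"

lemma AR_comm:
  assumes "q \<noteq> 0" "r \<noteq> 0"
  shows "Aop q r g (Rop q r h v) = Rop q r h (Aop q r g v)"
proof (rule ext, clarify)
  fix a b c d
  show "Aop q r g (Rop q r h v) (a,b,c,d) = Rop q r h (Aop q r g v) (a,b,c,d)"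
    using assms
    by (cases g; cases h; simp add: Aop_def Rop_def kap_def field_simps power_Suc split: nat.split)
qed

lemma A_rel_swap:
  assumes "q \<noteq> 0" "r \<noteq> 0"
  shows "Aop q r X12 (Aop q r X11 v) = (\<lambda>m. q * Aop q r X11 (Aop q r X12 v) m)"
    "Aop q r X21 (Aop q r X11 v) = (\<lambda>m. r * Aop q r X11 (Aop q r X21 v) m)"
    "Aop q r X22 (Aop q r X12 v) = (\<lambda>m. r * Aop q r X12 (Aop q r X22 v) m)"
    "Aop q r X22 (Aop q r X21 v) = (\<lambda>m. q * Aop q r X21 (Aop q r X22 v) m)"
    "Aop q r X21 (Aop q r X12 v) = (\<lambda>m. (r/q) * Aop q r X12 (Aop q r X21 v) m)"
    "Aop q r X22 (Aop q r X11 v) = (\<lambda>m. Aop q r X11 (Aop q r X22 v) m + ((q*r - 1)/q) * Aop q r X12 (Aop q r X21 v) m)"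
  using assms
  by (auto intro!: ext simp: Aop_def kap_def field_simps power_Suc split: nat.split)

definition lin :: "('k::field vec \<Rightarrow> 'k vec) \<Rightarrow> bool" where
  "lin F \<longleftrightarrow> (\<forall>v w s t. F (\<lambda>m. s * v m + t * w m) = (\<lambda>m. s * F v m + t * F w m))"

lemma lin_Aop: "lin (Aop q r g)"
  unfolding lin_def
  by (auto intro!: ext simp: Aop_def algebra_simps split: nat.split gen.split)

lemma lin_Rop: "lin (Rop q r g)"
  unfolding lin_def
  by (auto intro!: ext simp: Rop_def algebra_simps split: nat.split gen.split)


lemma take_eq_iff_len:
  assumes "i \<le> length x"
  shows "(take i x = u) \<longleftrightarrow> (i = length u \<and> take (length u) x = u)"
  using assms by (auto)

lemma fa_mult_word_left:
  "fa_mult (fa_word u) f x = (if take (length u) x = u then f (drop (length u) x) else 0)"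
proof -
  have "fa_mult (fa_word u) f x = (\<Sum>i\<le>length x. if i = length u then
        (if take (length u) x = u then f (drop (length u) x) else 0) else 0)"
    unfolding fa_mult_def fa_word_def
    by (rule sum.cong) auto
  also have "\<dots> = (if take (length u) x = u then f (drop (length u) x) else 0)"
    by (auto simp: sum.delta dest: arg_cong[of _ _ length])
  finally show ?thesis .
qed

lemma fa_mult_word_right:
  "fa_mult f (fa_word v) x = (if length v \<le> length x \<and> drop (length x - length v) x = v
      then f (take (length x - length v) x) else 0)"
proof -
  have "fa_mult f (fa_word v) x = (\<Sum>i\<le>length x. if i = length x - length v then
        (if length v \<le> length x \<and> drop (length x - length v) x = v
          then f (take (length x - length v) x) else 0) else 0)"
    unfolding fa_mult_def fa_word_def
    by (rule sum.cong) auto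
  also have "\<dots> = (if length v \<le> length x \<and> drop (length x - length v) x = v
      then f (take (length x - length v) x) else 0)"
    by (simp add: sum.delta)
  finally show ?thesis .
qed

lemma fa_mult_word_word: "fa_mult (fa_word u) (fa_word v) = fa_word (u @ v)"
  apply (rule ext)
  apply (subst fa_mult_word_left)
  apply (auto simp: fa_word_def)
  apply (metis append_take_drop_id)
  done

lemma sandwich_at: "fa_mult (fa_word u) (fa_mult h (fa_word v)) (u @ y @ v) = h y"
  by (simp add: fa_mult_word_left fa_mult_word_right)

lemma sandwich_out: "(\<forall>y. x \<noteq> u @ y @ v) \<Longrightarrow> fa_mult (fa_word u) (fa_mult h (fa_word v)) x = 0"
proof -
  assume H: "\<forall>y. x \<noteq> u @ y @ v"
  show ?thesis
  proof (rule ccontr)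
    assume "fa_mult (fa_word u) (fa_mult h (fa_word v)) x \<noteq> 0"
    then have t: "take (length u) x = u" and l: "length v \<le> length x - length u"
      and d: "drop (length (drop (length u) x) - length v) (drop (length u) x) = v"
      by (auto simp: fa_mult_word_left fa_mult_word_right split: if_splits)
    define z where "z = drop (length u) x"
    have x: "x = u @ z" using t unfolding z_def by (metis append_take_drop_id)
    have "z = take (length z - length v) z @ v" using d unfolding z_def[symmetric]
      by (metis append_take_drop_id)
    with x H show False by metis
  qed
qed


lemma fa_gen_mult: "fa_mult (fa_gen a) (fa_gen b) = fa_word [a,b]"
  unfolding fa_gen_def by (simp add: fa_mult_word_word)

lemma ideal_smult: "qm_ideal lam p f \<Longrightarrow> qm_ideal lam p (fa_smult c f)"
proof (induction rule: qm_ideal.induct)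
  case zero
  then show ?case by (simp add: fa_smult_def qm_ideal.zero)
next
  case (gen r c' u v)
  have "fa_smult c (fa_smult c' (fa_mult (fa_word u) (fa_mult r (fa_word v))))
     = fa_smult (c*c') (fa_mult (fa_word u) (fa_mult r (fa_word v)))"
    by (simp add: fa_smult_def mult.assoc)
  then show ?case using qm_ideal.gen[OF gen] by simp
next
  case (add f g)
  have "fa_smult c (fa_add f g) = fa_add (fa_smult c f) (fa_smult c g)"
    by (simp add: fa_smult_def fa_add_def fun_eq_iff algebra_simps)
  then show ?case using add by (simp add: qm_ideal.add)
qed

lemma ideal_comb: "qm_ideal lam p f \<Longrightarrow> qm_ideal lam p g \<Longrightarrow> qm_ideal lam p (\<lambda>x. a * f x + b * g x)"
  using qm_ideal.add[OF ideal_smult[of lam p f a] ideal_smult[of lam p g b]]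
  by (simp add: fa_add_def fa_smult_def)

lemma ideal_zero': "qm_ideal lam p (\<lambda>x. 0)" by (rule qm_ideal.zero)

lemma ideal_cong: "qm_ideal lam p f \<Longrightarrow> (\<And>x. g x = f x) \<Longrightarrow> qm_ideal lam p g"
proof -
  assume "qm_ideal lam p f" "\<And>x. g x = f x"
  then show ?thesis by (metis ext)
qed

lemma ideal_sum: "finite S \<Longrightarrow> (\<forall>s\<in>S. qm_ideal lam p (F s)) \<Longrightarrow>
   qm_ideal lam p (\<lambda>x. \<Sum>s\<in>S. c s * F s x)"
proof (induction S rule: finite_induct)
  case empty then show ?case by (simp add: qm_ideal.zero)
next
  case (insert s S)
  have "qm_ideal lam p (\<lambda>x. c s * F s x + 1 * (\<Sum>s\<in>S. c s * F s x))"
    using insert by (intro ideal_comb) auto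
  then show ?case using insert by simp
qed

lemma sandwich_eq:
  assumes "\<And>y. G (u @ y @ v) = h y" "\<And>x. (\<forall>y. x \<noteq> u @ y @ v) \<Longrightarrow> G x = 0"
  shows "fa_mult (fa_word u) (fa_mult h (fa_word v)) = G"
proof (rule ext)
  fix x
  show "fa_mult (fa_word u) (fa_mult h (fa_word v)) x = G x"
  proof (cases "\<exists>y. x = u @ y @ v")
    case True
    then obtain y where "x = u @ y @ v" by blast
    then show ?thesis using assms sandwich_at by simp
  next
    case False
    then show ?thesis using assms sandwich_out by auto
  qed
qed

lemma ideal_sw:
  assumes "(\<lambda>y. fa_word [g,h] y - \<alpha> * fa_word [h,g] y) \<in> qm_rels lam p"
  shows "qm_ideal lam p (\<lambda>x. fa_word (u@[g,h]@v) x - \<alpha> * fa_word (u@[h,g]@v) x)"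
proof -
  have e: "fa_mult (fa_word u) (fa_mult (\<lambda>y. fa_word [g,h] y - \<alpha> * fa_word [h,g] y) (fa_word v))
     = (\<lambda>x. fa_word (u@[g,h]@v) x - \<alpha> * fa_word (u@[h,g]@v) x)"
  proof (rule sandwich_eq)
    fix y show "fa_word (u@[g,h]@v) (u@y@v) - \<alpha> * fa_word (u@[h,g]@v) (u@y@v) = fa_word [g,h] y - \<alpha> * fa_word [h,g] y"
      by (simp add: fa_word_def)
  next
    fix x assume "\<forall>y. x \<noteq> u @ y @ v"
    then have "x \<noteq> u@[g,h]@v" "x \<noteq> u@[h,g]@v" by blast+
    then show "fa_word (u@[g,h]@v) x - \<alpha> * fa_word (u@[h,g]@v) x = 0" by (simp add: fa_word_def)
  qed
  show ?thesis using qm_ideal.gen[OF assms, of 1 u v] e by (simp add: fa_smult_def)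
qed

lemma ideal_sw6:
  assumes "(\<lambda>y. fa_word [g,h] y - (fa_word [h,g] y + \<alpha> * fa_word [a,b] y)) \<in> qm_rels lam p"
  shows "qm_ideal lam p (\<lambda>x. fa_word (u@[g,h]@v) x - (fa_word (u@[h,g]@v) x + \<alpha> * fa_word (u@[a,b]@v) x))"
proof -
  have e: "fa_mult (fa_word u) (fa_mult (\<lambda>y. fa_word [g,h] y - (fa_word [h,g] y + \<alpha> * fa_word [a,b] y)) (fa_word v))
     = (\<lambda>x. fa_word (u@[g,h]@v) x - (fa_word (u@[h,g]@v) x + \<alpha> * fa_word (u@[a,b]@v) x))"
  proof (rule sandwich_eq)
    fix y show "fa_word (u@[g,h]@v) (u@y@v) - (fa_word (u@[h,g]@v) (u@y@v) + \<alpha> * fa_word (u@[a,b]@v) (u@y@v)) = fa_word [g,h] y - (fa_word [h,g] y + \<alpha> * fa_word [a,b] y)"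
      by (simp add: fa_word_def)
  next
    fix x assume "\<forall>y. x \<noteq> u @ y @ v"
    then have "x \<noteq> u@[g,h]@v" "x \<noteq> u@[h,g]@v" "x \<noteq> u@[a,b]@v" by blast+
    then show "fa_word (u@[g,h]@v) x - (fa_word (u@[h,g]@v) x + \<alpha> * fa_word (u@[a,b]@v) x) = 0" by (simp add: fa_word_def)
  qed
  show ?thesis using qm_ideal.gen[OF assms, of 1 u v] e by (simp add: fa_smult_def)
qed

lemma rels_explicit: "qm_rels lam p12 =
  {(\<lambda>y. fa_word [X12,X11] y - p12 * fa_word [X11,X12] y),
   (\<lambda>y. fa_word [X21,X11] y - (lam * inverse p12) * fa_word [X11,X21] y),
   (\<lambda>y. fa_word [X22,X12] y - (lam * inverse p12) * fa_word [X12,X22] y),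
   (\<lambda>y. fa_word [X22,X21] y - p12 * fa_word [X21,X22] y),
   (\<lambda>y. fa_word [X21,X12] y - (lam * inverse p12 ^ 2) * fa_word [X12,X21] y),
   (\<lambda>y. fa_word [X22,X11] y - (fa_word [X11,X22] y + ((lam - 1) * inverse p12) * fa_word [X12,X21] y))}"
  unfolding qm_rels_def Let_def fa_gen_mult fa_diff_def fa_smult_def fa_add_def by simp

lemma fin_supp_word: "fin_supp (fa_word u)"
  unfolding fin_supp_def fa_word_def by simp

lemma fin_supp_rels: "r \<in> qm_rels lam p \<Longrightarrow> fin_supp r"
proof -
  assume a: "r \<in> qm_rels lam p"
  have "{w. r w \<noteq> 0} \<subseteq> {xs. set xs \<subseteq> {X11,X12,X21,X22} \<and> length xs = 2}"
  proof
    fix w assume "w \<in> {w. r w \<noteq> 0}"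
    then have "r w \<noteq> 0" by simp
    with a have "length w = 2"
      unfolding rels_explicit
      by (elim insertE emptyE; simp add: fa_word_def split: if_splits)
    moreover have "set w \<subseteq> {X11,X12,X21,X22}" by (auto intro: gen.exhaust)
    ultimately show "w \<in> {xs. set xs \<subseteq> {X11,X12,X21,X22} \<and> length xs = 2}" by simp
  qed
  then show ?thesis unfolding fin_supp_def
    by (rule finite_subset) (rule finite_lists_length_eq, simp)
qed

lemma ideal_fin: "qm_ideal lam p f \<Longrightarrow> fin_supp f"
proof (induction rule: qm_ideal.induct)
  case zero then show ?case by (simp add: fin_supp_def)
next
  case (gen r c u v)
  have "{x. fa_smult c (fa_mult (fa_word u) (fa_mult r (fa_word v))) x \<noteq> 0}
      \<subseteq> (\<lambda>y. u @ y @ v) ` {y. r y \<noteq> 0}"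
  proof
    fix x assume "x \<in> {x. fa_smult c (fa_mult (fa_word u) (fa_mult r (fa_word v))) x \<noteq> 0}"
    then have nz: "fa_mult (fa_word u) (fa_mult r (fa_word v)) x \<noteq> 0" by (auto simp: fa_smult_def)
    then obtain y where y: "x = u @ y @ v" using sandwich_out by blast
    then have "r y \<noteq> 0" using nz sandwich_at[of u r v y] y by simp
    then show "x \<in> (\<lambda>y. u @ y @ v) ` {y. r y \<noteq> 0}" using y by blast
  qed
  moreover have "finite {y. r y \<noteq> 0}" using fin_supp_rels[OF gen] by (simp add: fin_supp_def)
  ultimately show ?case unfolding fin_supp_def by (meson finite_imageI finite_subset)
next
  case (add f g)
  have "{x. fa_add f g x \<noteq> 0} \<subseteq> {x. f x \<noteq> 0} \<union> {x. g x \<noteq> 0}" by (auto simp: fa_add_def)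
  then show ?case using add unfolding fin_supp_def by (meson finite_Un finite_subset)
qed


fun rank :: "gen \<Rightarrow> nat" where
  "rank X11 = 0" | "rank X12 = 1" | "rank X21 = 2" | "rank X22 = 3"

definition wm :: "nat \<times> nat \<times> nat \<times> nat \<Rightarrow> gen list" where
  "wm m = (case m of (a,b,c,d) \<Rightarrow> replicate a X11 @ replicate b X12 @ replicate c X21 @ replicate d X22)"

definition cnt :: "gen list \<Rightarrow> nat \<times> nat \<times> nat \<times> nat" where
  "cnt w = (count_list w X11, count_list w X12, count_list w X21, count_list w X22)"

lemma count_replicate: "count_list (replicate n x) y = (if x = y then n else 0)"
  by (induction n) auto

lemma sorted_wm: "sorted (map rank (wm m))"
  by (cases m) (auto simp: wm_def sorted_append)

lemma cnt_wm: "cnt (wm m) = m"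
  by (cases m) (simp add: wm_def cnt_def count_replicate)

lemma wm_cnt: "sorted (map rank w) \<Longrightarrow> wm (cnt w) = w"
proof (induction w)
  case Nil then show ?case by (simp add: wm_def cnt_def)
next
  case (Cons g w)
  then have IH: "wm (cnt w) = w" and le: "\<forall>x\<in>set w. rank g \<le> rank x" by auto
  show ?case
  proof (cases g)
    case X11 then show ?thesis using IH by (simp add: wm_def cnt_def)
  next
    case X12
    then have "X11 \<notin> set w" using le by fastforce
    then show ?thesis using IH X12 by (simp add: wm_def cnt_def)
  next
    case X21
    then have "X11 \<notin> set w" "X12 \<notin> set w" using le by fastforce+
    then show ?thesis using IH X21 by (simp add: wm_def cnt_def)
  next
    case X22
    then have "X11 \<notin> set w" "X12 \<notin> set w" "X21 \<notin> set w" using le by fastforce+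
    then show ?thesis using IH X22 by (simp add: wm_def cnt_def)
  qed
qed

lemma wm_inj: "wm m = wm m' \<Longrightarrow> m = m'"
  by (metis cnt_wm)

definition dl :: "nat \<times> nat \<times> nat \<times> nat \<Rightarrow> 'k::field vec" where
  "dl m = (\<lambda>m'. if m' = m then 1 else 0)"

primrec Op :: "'k::field \<Rightarrow> 'k \<Rightarrow> gen list \<Rightarrow> 'k vec \<Rightarrow> 'k vec" where
  "Op q r [] y = y"
| "Op q r (g#w) y = Aop q r g (Op q r w y)"

lemma Op_append: "Op q r (u @ w) y = Op q r u (Op q r w y)"
  by (induction u) auto

lemma lin_comp: "lin F \<Longrightarrow> lin G \<Longrightarrow> lin (\<lambda>y. F (G y))"
  unfolding lin_def by simp

lemma lin_id: "lin (\<lambda>y. y)"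
  unfolding lin_def by simp

lemma lin_Op: "lin (Op q r w)"
proof (induction w)
  case Nil then show ?case using lin_id by (simp add: lin_def)
next
  case (Cons g w)
  have "lin (\<lambda>y. Aop q r g (Op q r w y))" by (rule lin_comp[OF lin_Aop Cons])
  then show ?case by simp
qed

lemma lin_smult: "lin F \<Longrightarrow> F (\<lambda>m. s * v m) = (\<lambda>m. s * F v m)"
  unfolding lin_def by (drule spec[of _ v], drule spec[of _ v], drule spec[of _ s], drule spec[of _ 0]) simp

lemma lin_add: "lin F \<Longrightarrow> F (\<lambda>m. v m + w m) = (\<lambda>m. F v m + F w m)"
  unfolding lin_def by (drule spec[of _ v], drule spec[of _ w], drule spec[of _ 1], drule spec[of _ 1]) simp

lemma lin_sum: assumes "lin F" "finite I" shows "F (\<lambda>m. \<Sum>i\<in>I. c i * v i m) = (\<lambda>m. \<Sum>i\<in>I. c i * F (v i) m)"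
  using assms(2)
proof (induction I rule: finite_induct)
  case empty
  then show ?case using lin_smult[OF assms(1), of 0 "\<lambda>m. 0"] by simp
next
  case (insert i I)
  have "F (\<lambda>m. \<Sum>i\<in>insert i I. c i * v i m) = F (\<lambda>m. c i * v i m + 1 * (\<Sum>i\<in>I. c i * v i m))"
    using insert by simp
  also have "\<dots> = (\<lambda>m. c i * F (v i) m + 1 * F (\<lambda>m. \<Sum>i\<in>I. c i * v i m) m)"
    using spec[OF spec[OF spec[OF spec[OF assms(1)[unfolded lin_def], of "v i"], of "\<lambda>m. \<Sum>i\<in>I. c i * v i m"], of "c i"], of 1]
    by simp
  finally show ?case using insert by simp
qed

lemma Aop_dl_X22: "Aop q r X22 (dl (0,0,0,d)) = dl (0,0,0,Suc d)"
  by (auto intro!: ext simp: Aop_def dl_def split: nat.split)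
lemma Aop_dl_X21: "Aop q r X21 (dl (0,0,c,d)) = dl (0,0,Suc c,d)"
  by (auto intro!: ext simp: Aop_def dl_def split: nat.split)
lemma Aop_dl_X12: "Aop q r X12 (dl (0,b,c,d)) = dl (0,Suc b,c,d)"
  by (auto intro!: ext simp: Aop_def dl_def split: nat.split)
lemma Aop_dl_X11: "Aop q r X11 (dl (a,b,c,d)) = dl (Suc a,b,c,d)"
  by (auto intro!: ext simp: Aop_def dl_def split: nat.split)

lemma Op_wm: "Op q r (wm m) (dl (0,0,0,0)) = dl m"
proof -
  obtain a b c d where m: "m = (a,b,c,d)" by (cases m) auto
  have 4: "Op q r (replicate d X22) (dl (0,0,0,0)) = dl (0,0,0,d)"
    by (induction d) (auto simp: Aop_dl_X22)
  have 3: "Op q r (replicate c X21) (dl (0,0,0,d)) = dl (0,0,c,d)"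
    by (induction c) (auto simp: Aop_dl_X21)
  have 2: "Op q r (replicate b X12) (dl (0,0,c,d)) = dl (0,b,c,d)"
    by (induction b) (auto simp: Aop_dl_X12)
  have 1: "Op q r (replicate a X11) (dl (0,b,c,d)) = dl (a,b,c,d)"
    by (induction a) (auto simp: Aop_dl_X11)
  show ?thesis using 1 2 3 4 by (simp add: m wm_def Op_append)
qed

definition Ev :: "'k::field vec \<Rightarrow> 'k falg" where
  "Ev v = (\<lambda>w. if sorted (map rank w) then v (cnt w) else 0)"

primrec inv :: "gen list \<Rightarrow> nat" where
  "inv [] = 0"
| "inv (g#w) = length (filter (\<lambda>h. rank h < rank g) w) + inv w"

definition n1122 :: "gen list \<Rightarrow> nat" where
  "n1122 w = count_list w X11 + count_list w X22"

lemma inv_swap: "rank h < rank g \<Longrightarrow> inv (u@[g,h]@v) = Suc (inv (u@[h,g]@v))"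
  by (induction u) auto

lemma n1122_swap: "n1122 (u@[g,h]@v) = n1122 (u@[h,g]@v)"
  by (simp add: n1122_def)

lemma n1122_6: "n1122 (u@[X12,X21]@v) < n1122 (u@[X22,X11]@v)"
  by (simp add: n1122_def)

lemma unsorted_split: "\<not> sorted (map rank w) \<Longrightarrow> \<exists>u g h v. w = u@[g,h]@v \<and> rank h < rank g"
proof (induction w)
  case Nil then show ?case by simp
next
  case (Cons x w)
  show ?case
  proof (cases w)
    case Nil then show ?thesis using Cons by simp
  next
    case (Cons y w')
    show ?thesis
    proof (cases "rank y < rank x")
      case True then show ?thesis using Cons by (metis append_Nil append_Cons)
    next
      case False
      have "\<not> sorted (map rank w)"
      proof
        assume "sorted (map rank w)"
        then have "sorted (map rank (x # w))" using False Cons by simp (meson le_trans not_less)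
        then show False using Cons.prems by simp
      qed
      then obtain u g h v where "w = u@[g,h]@v" "rank h < rank g" using Cons.IH by blast
      then show ?thesis by (metis append_Cons)
    qed
  qed
qed


lemma A_rels:
  assumes "p12 \<noteq> 0" "lam \<noteq> 0"
  defines "r \<equiv> lam * inverse p12"
  shows "Aop p12 r X12 (Aop p12 r X11 y) = (\<lambda>m. p12 * Aop p12 r X11 (Aop p12 r X12 y) m)"
    "Aop p12 r X21 (Aop p12 r X11 y) = (\<lambda>m. (lam * inverse p12) * Aop p12 r X11 (Aop p12 r X21 y) m)"
    "Aop p12 r X22 (Aop p12 r X12 y) = (\<lambda>m. (lam * inverse p12) * Aop p12 r X12 (Aop p12 r X22 y) m)"
    "Aop p12 r X22 (Aop p12 r X21 y) = (\<lambda>m. p12 * Aop p12 r X21 (Aop p12 r X22 y) m)"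
    "Aop p12 r X21 (Aop p12 r X12 y) = (\<lambda>m. (lam * inverse p12 ^ 2) * Aop p12 r X12 (Aop p12 r X21 y) m)"
    "Aop p12 r X22 (Aop p12 r X11 y) = (\<lambda>m. Aop p12 r X11 (Aop p12 r X22 y) m + ((lam - 1) * inverse p12) * Aop p12 r X12 (Aop p12 r X21 y) m)"
proof -
  have r0: "r \<noteq> 0" using assms by (simp add: r_def)
  have e1: "r / p12 = lam * inverse p12 ^ 2" using assms by (simp add: r_def field_simps power2_eq_square)
  have e2: "(p12 * r - 1) / p12 = (lam - 1) * inverse p12" using assms by (simp add: r_def field_simps)
  note R = A_rel_swap[OF assms(1) r0, of y]
  show "Aop p12 r X12 (Aop p12 r X11 y) = (\<lambda>m. p12 * Aop p12 r X11 (Aop p12 r X12 y) m)"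
    "Aop p12 r X21 (Aop p12 r X11 y) = (\<lambda>m. (lam * inverse p12) * Aop p12 r X11 (Aop p12 r X21 y) m)"
    "Aop p12 r X22 (Aop p12 r X12 y) = (\<lambda>m. (lam * inverse p12) * Aop p12 r X12 (Aop p12 r X22 y) m)"
    "Aop p12 r X22 (Aop p12 r X21 y) = (\<lambda>m. p12 * Aop p12 r X21 (Aop p12 r X22 y) m)"
    using R by (simp_all add: r_def)
  show "Aop p12 r X21 (Aop p12 r X12 y) = (\<lambda>m. (lam * inverse p12 ^ 2) * Aop p12 r X12 (Aop p12 r X21 y) m)"
    using R(5) e1 by simp
  show "Aop p12 r X22 (Aop p12 r X11 y) = (\<lambda>m. Aop p12 r X11 (Aop p12 r X22 y) m + ((lam - 1) * inverse p12) * Aop p12 r X12 (Aop p12 r X21 y) m)"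
    using R(6) e2 by simp
qed

abbreviation "d0 \<equiv> dl (0,0,0,0)"

lemma step_sw:
  assumes rel: "qm_ideal lam p12 (\<lambda>x. fa_word (u@[g,h]@v) x - \<alpha> * fa_word (u@[h,g]@v) x)"
  and IH: "qm_ideal lam p12 (\<lambda>x. fa_word (u@[h,g]@v) x - Ev (Op q r (u@[h,g]@v) d0) x)"
  and op: "\<And>y. Aop q r g (Aop q r h y) = (\<lambda>m. \<alpha> * Aop q r h (Aop q r g y) m)"
  shows "qm_ideal lam p12 (\<lambda>x. fa_word (u@[g,h]@v) x - Ev (Op q r (u@[g,h]@v) d0) x)"
proof -
  have "Op q r (u@[g,h]@v) d0 = (\<lambda>m. \<alpha> * Op q r (u@[h,g]@v) d0 m)"
    by (simp add: Op_append op lin_smult[OF lin_Op])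
  then have e: "Ev (Op q r (u@[g,h]@v) d0) x = \<alpha> * Ev (Op q r (u@[h,g]@v) d0) x" for x
    by (simp add: Ev_def)
  show ?thesis
    by (rule ideal_cong[OF ideal_comb[OF rel IH, of 1 \<alpha>]]) (subst e, simp add: algebra_simps)
qed

lemma step_6:
  assumes rel: "qm_ideal lam p12 (\<lambda>x. fa_word (u@[g,h]@v) x - (fa_word (u@[h,g]@v) x + \<alpha> * fa_word (u@[a,b]@v) x))"
  and IH1: "qm_ideal lam p12 (\<lambda>x. fa_word (u@[h,g]@v) x - Ev (Op q r (u@[h,g]@v) d0) x)"
  and IH2: "qm_ideal lam p12 (\<lambda>x. fa_word (u@[a,b]@v) x - Ev (Op q r (u@[a,b]@v) d0) x)"
  and op: "\<And>y. Aop q r g (Aop q r h y) = (\<lambda>m. Aop q r h (Aop q r g y) m + \<alpha> * Aop q r a (Aop q r b y) m)"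
  shows "qm_ideal lam p12 (\<lambda>x. fa_word (u@[g,h]@v) x - Ev (Op q r (u@[g,h]@v) d0) x)"
proof -
  have "Op q r (u@[g,h]@v) d0 = (\<lambda>m. 1 * Op q r (u@[h,g]@v) d0 m + \<alpha> * Op q r (u@[a,b]@v) d0 m)"
    using spec[OF spec[OF spec[OF spec[OF lin_Op[of q r u, unfolded lin_def], of "Aop q r h (Aop q r g (Op q r v d0))"], of "Aop q r a (Aop q r b (Op q r v d0))"], of 1], of \<alpha>]
    by (simp add: Op_append op)
  then have e: "Ev (Op q r (u@[g,h]@v) d0) x = Ev (Op q r (u@[h,g]@v) d0) x + \<alpha> * Ev (Op q r (u@[a,b]@v) d0) x" for x
    by (simp add: Ev_def)
  have "qm_ideal lam p12 (\<lambda>x. 1 * (fa_word (u@[g,h]@v) x - (fa_word (u@[h,g]@v) x + \<alpha> * fa_word (u@[a,b]@v) x))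
       + 1 * (1 * (fa_word (u@[h,g]@v) x - Ev (Op q r (u@[h,g]@v) d0) x) + \<alpha> * (fa_word (u@[a,b]@v) x - Ev (Op q r (u@[a,b]@v) d0) x)))"
    by (rule ideal_comb[OF rel ideal_comb[OF IH1 IH2]])
  then show ?thesis
    by (rule ideal_cong) (subst e, simp add: algebra_simps)
qed

lemma inv_le: "inv w \<le> length w * length w"
proof (induction w)
  case Nil then show ?case by simp
next
  case (Cons g w)
  have a: "length (filter (\<lambda>h. rank h < rank g) w) \<le> length w" by simp
  have "inv (g#w) = length (filter (\<lambda>h. rank h < rank g) w) + inv w" by simp
  also have "\<dots> \<le> length w + length w * length w" using a Cons.IH by (rule add_mono)
  also have "\<dots> \<le> length (g#w) * length (g#w)" by simp
  finally show ?case .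
qed

definition Mw :: "gen list \<Rightarrow> nat" where
  "Mw w = n1122 w * (length w * length w + 1) + inv w"

lemma Mw_swap: "rank h < rank g \<Longrightarrow> Mw (u@[h,g]@v) < Mw (u@[g,h]@v)"
  unfolding Mw_def using inv_swap[of h g u v] n1122_swap[of u g h v] by simp

lemma Mw_6: "Mw (u@[X12,X21]@v) < Mw (u@[X22,X11]@v)"
proof -
  define L where "L = length (u@[X22,X11]@v)"
  have L: "length (u@[X12,X21]@v) = L" by (simp add: L_def)
  define n' where "n' = n1122 (u@[X12,X21]@v)"
  define n where "n = n1122 (u@[X22,X11]@v)"
  have "n' + 1 \<le> n" using n1122_6[of u v] unfolding n_def n'_def by simp
  have "inv (u@[X12,X21]@v) \<le> L * L" using inv_le[of "u@[X12,X21]@v"] by (simp only: L)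
  then have "Mw (u@[X12,X21]@v) < (n' + 1) * (L * L + 1)" unfolding Mw_def n'_def[symmetric] L by simp
  also have "\<dots> \<le> n * (L * L + 1)" using \<open>n' + 1 \<le> n\<close> by (rule mult_right_mono) simp
  also have "\<dots> \<le> Mw (u@[X22,X11]@v)" unfolding Mw_def n_def L_def by simp
  finally show ?thesis .
qed

lemma Ev_dl: "Ev (dl m) = fa_word (wm m)"
proof (rule ext)
  fix x
  show "Ev (dl m) x = fa_word (wm m) x"
  proof (cases "x = wm m")
    case True then show ?thesis by (simp add: Ev_def dl_def fa_word_def sorted_wm cnt_wm)
  next
    case False
    then have "\<not> (sorted (map rank x) \<and> cnt x = m)" using wm_cnt by metis
    then show ?thesis using False by (auto simp: Ev_def dl_def fa_word_def)
  qed
qed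

lemma span_word:
  assumes "p12 \<noteq> 0" "lam \<noteq> 0"
  shows "qm_ideal lam p12 (\<lambda>x. fa_word w x - Ev (Op p12 (lam * inverse p12) w d0) x)"
proof (induction "Mw w" arbitrary: w rule: less_induct)
  case less
  let ?r = "lam * inverse p12"
  show ?case
  proof (cases "sorted (map rank w)")
    case True
    then have "Op p12 ?r w d0 = dl (cnt w)" using Op_wm[of p12 ?r "cnt w"] wm_cnt[OF True] by simp
    then have "Ev (Op p12 ?r w d0) = fa_word w" using Ev_dl[of "cnt w"] wm_cnt[OF True] by simp
    then show ?thesis by (simp add: qm_ideal.zero)
  next
    case False
    then obtain u g h v where w: "w = u@[g,h]@v" and rk: "rank h < rank g" using unsorted_split by blast
    have IH1: "qm_ideal lam p12 (\<lambda>x. fa_word (u@[h,g]@v) x - Ev (Op p12 ?r (u@[h,g]@v) d0) x)"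
      using less Mw_swap[OF rk] w by blast
    note AR = A_rels[OF assms]
    have "(g = X12 \<and> h = X11) \<or> (g = X21 \<and> h = X11) \<or> (g = X22 \<and> h = X12) \<or>
          (g = X22 \<and> h = X21) \<or> (g = X21 \<and> h = X12) \<or> (g = X22 \<and> h = X11)"
      using rk by (cases g; cases h) auto
    then show ?thesis
    proof (elim disjE conjE)
      assume gh: "g = X12" "h = X11"
      have rel: "qm_ideal lam p12 (\<lambda>x. fa_word (u@[X12,X11]@v) x - p12 * fa_word (u@[X11,X12]@v) x)"
        by (rule ideal_sw) (simp add: rels_explicit)
      show ?thesis unfolding w gh using step_sw[OF rel IH1[unfolded gh] AR(1)] .
    next
      assume gh: "g = X21" "h = X11"
      have rel: "qm_ideal lam p12 (\<lambda>x. fa_word (u@[X21,X11]@v) x - (lam * inverse p12) * fa_word (u@[X11,X21]@v) x)"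
        by (rule ideal_sw) (simp add: rels_explicit)
      show ?thesis unfolding w gh using step_sw[OF rel IH1[unfolded gh] AR(2)] .
    next
      assume gh: "g = X22" "h = X12"
      have rel: "qm_ideal lam p12 (\<lambda>x. fa_word (u@[X22,X12]@v) x - (lam * inverse p12) * fa_word (u@[X12,X22]@v) x)"
        by (rule ideal_sw) (simp add: rels_explicit)
      show ?thesis unfolding w gh using step_sw[OF rel IH1[unfolded gh] AR(3)] .
    next
      assume gh: "g = X22" "h = X21"
      have rel: "qm_ideal lam p12 (\<lambda>x. fa_word (u@[X22,X21]@v) x - p12 * fa_word (u@[X21,X22]@v) x)"
        by (rule ideal_sw) (simp add: rels_explicit)
      show ?thesis unfolding w gh using step_sw[OF rel IH1[unfolded gh] AR(4)] .
    next
      assume gh: "g = X21" "h = X12"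
      have rel: "qm_ideal lam p12 (\<lambda>x. fa_word (u@[X21,X12]@v) x - (lam * inverse p12 ^ 2) * fa_word (u@[X12,X21]@v) x)"
        by (rule ideal_sw) (simp add: rels_explicit)
      show ?thesis unfolding w gh using step_sw[OF rel IH1[unfolded gh] AR(5)] .
    next
      assume gh: "g = X22" "h = X11"
      have rel: "qm_ideal lam p12 (\<lambda>x. fa_word (u@[X22,X11]@v) x - (fa_word (u@[X11,X22]@v) x + ((lam - 1) * inverse p12) * fa_word (u@[X12,X21]@v) x))"
        by (rule ideal_sw6) (simp add: rels_explicit)
      have IH2: "qm_ideal lam p12 (\<lambda>x. fa_word (u@[X12,X21]@v) x - Ev (Op p12 ?r (u@[X12,X21]@v) d0) x)"
        using less Mw_6 w gh by blast
      show ?thesis unfolding w gh using step_6[OF rel IH1[unfolded gh] IH2 AR(6)] .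
    qed
  qed
qed


definition T :: "'k::field \<Rightarrow> 'k \<Rightarrow> 'k falg \<Rightarrow> 'k vec \<Rightarrow> 'k vec" where
  "T q r f y = (\<lambda>m. \<Sum>w\<in>{w. f w \<noteq> 0}. f w * Op q r w y m)"

lemma T_sup:
  assumes "finite W" "{w. f w \<noteq> 0} \<subseteq> W"
  shows "T q r f y m = (\<Sum>w\<in>W. f w * Op q r w y m)"
  unfolding T_def by (rule sum.mono_neutral_left[OF assms]) auto

lemma fin_supp_comb2: "fin_supp (f :: 'k::field falg) \<Longrightarrow> fin_supp g \<Longrightarrow> fin_supp (\<lambda>w. a * f w + b * g w)"
  unfolding fin_supp_def
proof -
  assume "finite {w. f w \<noteq> 0}" "finite {w. g w \<noteq> 0}"
  moreover have "{w. a * f w + b * g w \<noteq> 0} \<subseteq> {w. f w \<noteq> 0} \<union> {w. g w \<noteq> 0}"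
  proof
    fix w assume "w \<in> {w. a * f w + b * g w \<noteq> 0}"
    then show "w \<in> {w. f w \<noteq> 0} \<union> {w. g w \<noteq> 0}" by (cases "f w = 0"; cases "g w = 0") auto
  qed
  ultimately show "finite {w. a * f w + b * g w \<noteq> 0}" by (meson finite_Un finite_subset)
qed

lemma T_comb2:
  assumes "fin_supp f" "fin_supp g"
  shows "T q r (\<lambda>w. a * f w + b * g w) y m = a * T q r f y m + b * T q r g y m"
proof -
  let ?W = "{w. f w \<noteq> 0} \<union> {w. g w \<noteq> 0}"
  have fW: "finite ?W" using assms by (simp add: fin_supp_def)
  have "T q r (\<lambda>w. a * f w + b * g w) y m = (\<Sum>w\<in>?W. (a * f w + b * g w) * Op q r w y m)"
    by (rule T_sup[OF fW]) auto
  also have "\<dots> = a * (\<Sum>w\<in>?W. f w * Op q r w y m) + b * (\<Sum>w\<in>?W. g w * Op q r w y m)"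
    by (simp add: sum.distrib sum_distrib_left algebra_simps)
  also have "\<dots> = a * T q r f y m + b * T q r g y m"
    using T_sup[OF fW, of f] T_sup[OF fW, of g] by auto
  finally show ?thesis .
qed

lemma T_diff2: "fin_supp f \<Longrightarrow> fin_supp g \<Longrightarrow> T q r (\<lambda>w. f w - \<alpha> * g w) y m = T q r f y m - \<alpha> * T q r g y m"
  using T_comb2[of f g q r 1 "-\<alpha>" y m] by simp

lemma sum_nz: "(\<Sum>s\<in>S. h s) \<noteq> (0::'a::comm_monoid_add) \<Longrightarrow> \<exists>s\<in>S. h s \<noteq> 0"
proof (rule ccontr)
  assume a: "(\<Sum>s\<in>S. h s) \<noteq> 0" and "\<not> (\<exists>s\<in>S. h s \<noteq> 0)"
  then have "\<forall>s\<in>S. h s = 0" by simp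
  then have "(\<Sum>s\<in>S. h s) = 0" by (rule sum.neutral)
  with a show False by simp
qed

lemma T_lincomb:
  assumes "finite S" "\<forall>s\<in>S. fin_supp (F s)"
  shows "T q r (\<lambda>w. \<Sum>s\<in>S. c s * F s w) y m = (\<Sum>s\<in>S. c s * T q r (F s) y m)"
proof -
  let ?W = "\<Union>s\<in>S. {w. F s w \<noteq> 0}"
  have fW: "finite ?W" using assms by (simp add: fin_supp_def)
  have "T q r (\<lambda>w. \<Sum>s\<in>S. c s * F s w) y m = (\<Sum>w\<in>?W. (\<Sum>s\<in>S. c s * F s w) * Op q r w y m)"
  proof (rule T_sup[OF fW], rule subsetI)
    fix w assume "w \<in> {w. (\<Sum>s\<in>S. c s * F s w) \<noteq> 0}"
    then obtain s where "s \<in> S" "c s * F s w \<noteq> 0" using sum_nz[of "\<lambda>s. c s * F s w" S] by auto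
    then show "w \<in> ?W" by (cases "F s w = 0") auto
  qed
  also have "\<dots> = (\<Sum>s\<in>S. c s * (\<Sum>w\<in>?W. F s w * Op q r w y m))"
    by (simp only: sum_distrib_right sum_distrib_left mult.assoc) (rule sum.swap)
  also have "\<dots> = (\<Sum>s\<in>S. c s * T q r (F s) y m)"
    by (rule sum.cong[OF refl]) (subst T_sup[OF fW], auto)
  finally show ?thesis .
qed

lemma fin_supp_lincomb: "finite S \<Longrightarrow> \<forall>s\<in>S. fin_supp (F s :: 'k::field falg) \<Longrightarrow> fin_supp (\<lambda>w. \<Sum>s\<in>S. c s * F s w)"
  unfolding fin_supp_def
proof -
  assume a: "finite S" "\<forall>s\<in>S. finite {w. F s w \<noteq> 0}"
  show "finite {w. (\<Sum>s\<in>S. c s * F s w) \<noteq> 0}"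
  proof (rule finite_subset[of _ "\<Union>s\<in>S. {w. F s w \<noteq> 0}"])
    show "{w. (\<Sum>s\<in>S. c s * F s w) \<noteq> 0} \<subseteq> (\<Union>s\<in>S. {w. F s w \<noteq> 0})"
    proof
      fix w assume "w \<in> {w. (\<Sum>s\<in>S. c s * F s w) \<noteq> 0}"
      then obtain s where "s \<in> S" "c s * F s w \<noteq> 0" using sum_nz[of "\<lambda>s. c s * F s w" S] by auto
      then show "w \<in> (\<Union>s\<in>S. {w. F s w \<noteq> 0})" by (cases "F s w = 0") auto
    qed
  qed (use a in auto)
qed

lemma T_word: "T q r (fa_word u) y = Op q r u y"
proof (rule ext)
  fix m
  have "T q r (fa_word u) y m = (\<Sum>w\<in>{u}. fa_word u w * Op q r w y m)"
    by (rule T_sup) (auto simp: fa_word_def)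
  then show "T q r (fa_word u) y m = Op q r u y m" by (simp add: fa_word_def)
qed

lemma lin_pt: "lin F \<Longrightarrow> F (\<lambda>m. s * v m + t * w m) m = s * F v m + t * F w m"
  unfolding lin_def by simp

lemma lin_T: "lin (T q r f)"
  unfolding lin_def T_def
proof (intro allI ext)
  fix v w s t m
  have "(\<Sum>x\<in>{w. f w \<noteq> 0}. f x * Op q r x (\<lambda>m. s * v m + t * w m) m)
     = (\<Sum>x\<in>{w. f w \<noteq> 0}. f x * (s * Op q r x v m + t * Op q r x w m))"
    by (simp add: lin_pt[OF lin_Op])
  also have "\<dots> = s * (\<Sum>x\<in>{w. f w \<noteq> 0}. f x * Op q r x v m) + t * (\<Sum>x\<in>{w. f w \<noteq> 0}. f x * Op q r x w m)"
    by (simp add: sum.distrib sum_distrib_left algebra_simps)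
  finally show "(\<Sum>x\<in>{w. f w \<noteq> 0}. f x * Op q r x (\<lambda>m. s * v m + t * w m) m) =
       s * (\<Sum>x\<in>{w. f w \<noteq> 0}. f x * Op q r x v m) + t * (\<Sum>x\<in>{w. f w \<noteq> 0}. f x * Op q r x w m)" .
qed

lemma T_right_word:
  assumes "fin_supp f"
  shows "T q r (fa_mult f (fa_word v)) y = T q r f (Op q r v y)"
proof (rule ext)
  fix m
  let ?F = "{w. f w \<noteq> 0}"
  have fF: "finite ?F" using assms by (simp add: fin_supp_def)
  have val: "fa_mult f (fa_word v) (w @ v) = f w" for w
    by (simp add: fa_mult_word_right)
  have "T q r (fa_mult f (fa_word v)) y m = (\<Sum>x\<in>(\<lambda>w. w @ v) ` ?F. fa_mult f (fa_word v) x * Op q r x y m)"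
  proof (rule T_sup)
    show "finite ((\<lambda>w. w @ v) ` ?F)" using fF by simp
    show "{w. fa_mult f (fa_word v) w \<noteq> 0} \<subseteq> (\<lambda>w. w @ v) ` ?F"
    proof
      fix x assume "x \<in> {w. fa_mult f (fa_word v) w \<noteq> 0}"
      then have nz: "fa_mult f (fa_word v) x \<noteq> 0" by simp
      then have "length v \<le> length x" "drop (length x - length v) x = v"
        by (auto simp: fa_mult_word_right split: if_splits)
      then have x: "x = take (length x - length v) x @ v" by (metis append_take_drop_id)
      then have "f (take (length x - length v) x) \<noteq> 0" using nz val by metis
      then show "x \<in> (\<lambda>w. w @ v) ` ?F" using x by blast
    qed
  qed
  also have "\<dots> = (\<Sum>w\<in>?F. f w * Op q r w (Op q r v y) m)"
    by (subst sum.reindex) (auto simp: inj_on_def val Op_append)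
  also have "\<dots> = T q r f (Op q r v y) m" unfolding T_def by simp
  finally show "T q r (fa_mult f (fa_word v)) y m = T q r f (Op q r v y) m" .
qed

lemma T_left_word:
  assumes "fin_supp f"
  shows "T q r (fa_mult (fa_word u) f) y = Op q r u (T q r f y)"
proof (rule ext)
  fix m
  let ?F = "{w. f w \<noteq> 0}"
  have fF: "finite ?F" using assms by (simp add: fin_supp_def)
  have val: "fa_mult (fa_word u) f (u @ w) = f w" for w
    by (simp add: fa_mult_word_left)
  have "T q r (fa_mult (fa_word u) f) y m = (\<Sum>x\<in>(\<lambda>w. u @ w) ` ?F. fa_mult (fa_word u) f x * Op q r x y m)"
  proof (rule T_sup)
    show "finite ((\<lambda>w. u @ w) ` ?F)" using fF by simp
    show "{w. fa_mult (fa_word u) f w \<noteq> 0} \<subseteq> (\<lambda>w. u @ w) ` ?F"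
    proof
      fix x assume "x \<in> {w. fa_mult (fa_word u) f w \<noteq> 0}"
      then have nz: "fa_mult (fa_word u) f x \<noteq> 0" by simp
      then have "take (length u) x = u"
        by (auto simp: fa_mult_word_left split: if_splits)
      then have x: "x = u @ drop (length u) x" by (metis append_take_drop_id)
      then have "f (drop (length u) x) \<noteq> 0" using nz val by metis
      then show "x \<in> (\<lambda>w. u @ w) ` ?F" using x by blast
    qed
  qed
  also have "\<dots> = (\<Sum>w\<in>?F. f w * Op q r u (Op q r w y) m)"
    by (subst sum.reindex) (auto simp: inj_on_def val Op_append)
  also have "\<dots> = Op q r u (\<lambda>m. \<Sum>w\<in>?F. f w * Op q r w y m) m"
    using lin_sum[OF lin_Op fF, of q r u f "\<lambda>w. Op q r w y"] by simp
  also have "\<dots> = Op q r u (T q r f y) m" unfolding T_def by simp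
  finally show "T q r (fa_mult (fa_word u) f) y m = Op q r u (T q r f y) m" .
qed

lemma fin_supp_mult:
  assumes "fin_supp f" "fin_supp g"
  shows "fin_supp (fa_mult f g)"
  unfolding fin_supp_def
proof (rule finite_subset)
  show "{w. fa_mult f g w \<noteq> 0} \<subseteq> (\<lambda>(a,b). a @ b) ` ({w. f w \<noteq> 0} \<times> {w. g w \<noteq> 0})"
  proof
    fix x assume "x \<in> {w. fa_mult f g w \<noteq> 0}"
    then obtain i where "f (take i x) * g (drop i x) \<noteq> 0"
      unfolding fa_mult_def using sum_nz by fastforce
    then show "x \<in> (\<lambda>(a,b). a @ b) ` ({w. f w \<noteq> 0} \<times> {w. g w \<noteq> 0})"
      by (intro image_eqI[of _ _ "(take i x, drop i x)"]) auto
  qed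
  show "finite ((\<lambda>(a,b). a @ b) ` ({w. f w \<noteq> 0} \<times> {w. g w \<noteq> 0}))"
    using assms by (simp add: fin_supp_def)
qed

lemma fa_mult_sum_right:
  "fa_mult f (\<lambda>x. \<Sum>s\<in>S. c s * F s x) x = (\<Sum>s\<in>S. c s * fa_mult f (F s) x)"
  unfolding fa_mult_def
  apply (simp only: sum_distrib_left)
  apply (subst sum.swap)
  apply (simp add: mult.left_commute)
  done

lemma fin_expand: "fin_supp g \<Longrightarrow> g x = (\<Sum>w\<in>{w. g w \<noteq> 0}. g w * fa_word w x)"
proof -
  assume "fin_supp g"
  then have f: "finite {w. g w \<noteq> 0}" by (simp add: fin_supp_def)
  have "(\<Sum>w\<in>{w. g w \<noteq> 0}. g w * fa_word w x) = (\<Sum>w\<in>{w. g w \<noteq> 0}. if w = x then g x else 0)"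
    by (rule sum.cong) (auto simp: fa_word_def)
  also have "\<dots> = (if x \<in> {w. g w \<noteq> 0} then g x else 0)" using f by (simp add: sum.delta)
  also have "\<dots> = g x" by auto
  finally show ?thesis by simp
qed

lemma T_mult:
  assumes f: "fin_supp f" and g: "fin_supp g"
  shows "T q r (fa_mult f g) y = T q r f (T q r g y)"
proof (rule ext)
  fix m
  let ?G = "{w. g w \<noteq> 0}"
  have fG: "finite ?G" using g by (simp add: fin_supp_def)
  have g': "g = (\<lambda>x. \<Sum>w\<in>?G. g w * fa_word w x)"
    using fin_expand[OF g] by (rule ext)
  have e: "fa_mult f g = (\<lambda>x. \<Sum>w\<in>?G. g w * fa_mult f (fa_word w) x)"
  proof (rule ext)
    fix x
    have "fa_mult f g x = fa_mult f (\<lambda>x. \<Sum>w\<in>?G. g w * fa_word w x) x" by (subst g', rule refl)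
    also have "\<dots> = (\<Sum>w\<in>?G. g w * fa_mult f (fa_word w) x)" by (rule fa_mult_sum_right)
    finally show "fa_mult f g x = (\<Sum>w\<in>?G. g w * fa_mult f (fa_word w) x)" .
  qed
  have "T q r (fa_mult f g) y m = (\<Sum>w\<in>?G. g w * T q r (fa_mult f (fa_word w)) y m)"
    unfolding e by (rule T_lincomb[OF fG]) (auto intro: fin_supp_mult f fin_supp_word)
  also have "\<dots> = (\<Sum>w\<in>?G. g w * T q r f (Op q r w y) m)"
    by (simp add: T_right_word[OF f])
  also have "\<dots> = T q r f (\<lambda>m. \<Sum>w\<in>?G. g w * Op q r w y m) m"
    using lin_sum[OF lin_T fG, of q r f g "\<lambda>w. Op q r w y"] by simp
  also have "\<dots> = T q r f (T q r g y) m" by (simp add: T_def)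
  finally show "T q r (fa_mult f g) y m = T q r f (T q r g y) m" .
qed

lemma T_zero: "T q r (\<lambda>w. 0) y = (\<lambda>m. 0)"
  unfolding T_def by simp

lemma Op_zero: "Op q r u (\<lambda>m. 0) = (\<lambda>m. 0)"
  using lin_smult[OF lin_Op, of q r u 0 "\<lambda>m. 0"] by simp


lemma T_rels:
  assumes "p12 \<noteq> 0" "lam \<noteq> 0" "r \<in> qm_rels lam p12"
  shows "T p12 (lam * inverse p12) r z = (\<lambda>m. 0)"
proof -
  note AR = A_rels[OF assms(1,2)]
  have w: "fin_supp (fa_word u)" for u by (rule fin_supp_word)
  have 3: "T q r' (\<lambda>y. fa_word a y - (fa_word b y + \<alpha> * fa_word c y)) z m
     = Op q r' a z m - (Op q r' b z m + \<alpha> * Op q r' c z m)" for q r' a b c \<alpha> m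
  proof -
    have "(\<lambda>y. fa_word a y - (fa_word b y + \<alpha> * fa_word c y)) =
          (\<lambda>y. 1 * fa_word a y + (-1) * (\<lambda>y. 1 * fa_word b y + \<alpha> * fa_word c y) y)"
      by (simp add: fun_eq_iff)
    then have "T q r' (\<lambda>y. fa_word a y - (fa_word b y + \<alpha> * fa_word c y)) z m =
          T q r' (\<lambda>y. 1 * fa_word a y + (-1) * (\<lambda>y. 1 * fa_word b y + \<alpha> * fa_word c y) y) z m"
      by simp
    also have "\<dots> = 1 * T q r' (fa_word a) z m + (-1) * T q r' (\<lambda>y. 1 * fa_word b y + \<alpha> * fa_word c y) z m"
      by (rule T_comb2[OF w fin_supp_comb2[OF w w]])
    also have "\<dots> = 1 * Op q r' a z m + (-1) * (1 * Op q r' b z m + \<alpha> * Op q r' c z m)"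
      by (simp only: T_comb2[OF w w] T_word)
    also have "\<dots> = Op q r' a z m - (Op q r' b z m + \<alpha> * Op q r' c z m)"
      by simp
    finally show ?thesis .
  qed
  show ?thesis using assms(3) unfolding rels_explicit
    apply (simp only: insert_iff empty_iff simp_thms)
    apply (elim disjE; hypsubst; rule ext; simp add: T_diff2 w T_word 3 AR)
    done
qed


lemma T_smult: "fin_supp X \<Longrightarrow> T q r (fa_smult c X) y m = c * T q r X y m"
proof -
  assume fX: "fin_supp X"
  have "fa_smult c X = (\<lambda>w. c * X w + 0 * X w)" by (simp add: fa_smult_def)
  then show ?thesis using T_comb2[OF fX fX, of q r c 0 y m] by simp
qed

lemma T_add: "fin_supp f \<Longrightarrow> fin_supp g \<Longrightarrow> T q r (fa_add f g) y m = T q r f y m + T q r g y m"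
proof -
  assume f: "fin_supp f" and g: "fin_supp g"
  have "fa_add f g = (\<lambda>w. 1 * f w + 1 * g w)" by (simp add: fa_add_def)
  then show ?thesis using T_comb2[OF f g, of q r 1 1 y m] by simp
qed

lemma T_ideal:
  assumes "p12 \<noteq> 0" "lam \<noteq> 0"
  shows "qm_ideal lam p12 e \<Longrightarrow> T p12 (lam * inverse p12) e y = (\<lambda>m. 0)"
proof (induction arbitrary: y rule: qm_ideal.induct)
  case zero then show ?case by (rule T_zero)
next
  case (gen r c u v)
  let ?r = "lam * inverse p12"
  have fr: "fin_supp r" by (rule fin_supp_rels[OF gen])
  have f1: "fin_supp (fa_mult r (fa_word v))" by (rule fin_supp_mult[OF fr fin_supp_word])
  have f2: "fin_supp (fa_mult (fa_word u) (fa_mult r (fa_word v)))" by (rule fin_supp_mult[OF fin_supp_word f1])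
  have "T p12 ?r (fa_mult (fa_word u) (fa_mult r (fa_word v))) y = Op p12 ?r u (T p12 ?r (fa_mult r (fa_word v)) y)"
    by (rule T_left_word[OF f1])
  also have "\<dots> = Op p12 ?r u (T p12 ?r r (Op p12 ?r v y))" by (simp only: T_right_word[OF fr])
  also have "\<dots> = (\<lambda>m. 0)" by (simp only: T_rels[OF assms gen] Op_zero)
  finally have z: "T p12 ?r (fa_mult (fa_word u) (fa_mult r (fa_word v))) y = (\<lambda>m. 0)" .
  show ?case
  proof (rule ext)
    fix m
    show "T p12 ?r (fa_smult c (fa_mult (fa_word u) (fa_mult r (fa_word v)))) y m = 0"
      using T_smult[OF f2, of p12 ?r c y m] z by simp
  qed
next
  case (add f g)
  show ?case
  proof (rule ext)
    fix m
    show "T p12 (lam * inverse p12) (fa_add f g) y m = 0"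
      using T_add[OF ideal_fin[OF add(1)] ideal_fin[OF add(2)], of p12 "lam * inverse p12" y m] add.IH
      by simp
  qed
qed


definition commA :: "('k::field vec \<Rightarrow> 'k vec) \<Rightarrow> 'k \<Rightarrow> 'k \<Rightarrow> bool" where
  "commA F q r \<longleftrightarrow> (\<forall>h y. F (Aop q r h y) = Aop q r h (F y))"

lemma pow_scalar:
  assumes "\<And>y. Aop q r g (H y) = (\<lambda>m. s * H (Aop q r g y) m)"
  shows "Op q r (replicate n g) (H y) = (\<lambda>m. s^n * H (Op q r (replicate n g) y) m)"
proof (induction n)
  case 0 then show ?case by simp
next
  case (Suc n)
  have "Op q r (replicate (Suc n) g) (H y) = Aop q r g (\<lambda>m. s^n * H (Op q r (replicate n g) y) m)"
    using Suc by simp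
  also have "\<dots> = (\<lambda>m. s^n * Aop q r g (H (Op q r (replicate n g) y)) m)"
    by (rule lin_smult[OF lin_Aop])
  also have "\<dots> = (\<lambda>m. s^(Suc n) * H (Op q r (replicate (Suc n) g) y) m)"
    by (simp add: assms algebra_simps)
  finally show ?case .
qed

lemma swap_inv:
  assumes "\<And>y. Aop q r g (Aop q r h y) = (\<lambda>m. s * Aop q r h (Aop q r g y) m)" "s \<noteq> 0"
  shows "Aop q r h (Aop q r g y) = (\<lambda>m. inverse s * Aop q r g (Aop q r h y) m)"
  using assms by (simp add: fun_eq_iff)

lemma pow_comm_scalar:
  assumes "\<And>y. Aop q r g (Aop q r h y) = (\<lambda>m. s * Aop q r h (Aop q r g y) m)" "s^l = 1"
  shows "Op q r (replicate l g) (Aop q r h y) = Aop q r h (Op q r (replicate l g) y)"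
  using pow_scalar[of q r g "Aop q r h" s l y, OF assms(1)] assms(2) by simp

lemma H_A22:
  assumes "q \<noteq> 0" "r \<noteq> 0"
  shows "Aop q r X22 (Aop q r X12 (Aop q r X21 z)) = (\<lambda>m. (q*r) * Aop q r X12 (Aop q r X21 (Aop q r X22 z)) m)"
proof -
  note R = A_rel_swap[OF assms]
  have "Aop q r X22 (Aop q r X12 (Aop q r X21 z)) = (\<lambda>m. r * Aop q r X12 (Aop q r X22 (Aop q r X21 z)) m)"
    by (rule R(3))
  also have "\<dots> = (\<lambda>m. r * Aop q r X12 (\<lambda>m. q * Aop q r X21 (Aop q r X22 z) m) m)"
    by (simp add: R(4))
  also have "\<dots> = (\<lambda>m. (q*r) * Aop q r X12 (Aop q r X21 (Aop q r X22 z)) m)"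
    by (simp add: lin_smult[OF lin_Aop] mult_ac)
  finally show ?thesis .
qed

lemma A11_H:
  assumes "q \<noteq> 0" "r \<noteq> 0"
  shows "Aop q r X11 (Aop q r X12 (Aop q r X21 z)) = (\<lambda>m. inverse (q*r) * Aop q r X12 (Aop q r X21 (Aop q r X11 z)) m)"
proof -
  note R = A_rel_swap[OF assms]
  have "Aop q r X12 (Aop q r X21 (Aop q r X11 z)) = (\<lambda>m. r * Aop q r X12 (Aop q r X11 (Aop q r X21 z)) m)"
    by (simp add: R(2) lin_smult[OF lin_Aop])
  also have "\<dots> = (\<lambda>m. (q*r) * Aop q r X11 (Aop q r X12 (Aop q r X21 z)) m)"
    by (simp add: R(1) lin_smult[OF lin_Aop] mult_ac)
  finally have e: "Aop q r X12 (Aop q r X21 (Aop q r X11 z)) = (\<lambda>m. (q*r) * Aop q r X11 (Aop q r X12 (Aop q r X21 z)) m)" .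
  show ?thesis
  proof (rule ext)
    fix m
    show "Aop q r X11 (Aop q r X12 (Aop q r X21 z)) m = inverse (q*r) * Aop q r X12 (Aop q r X21 (Aop q r X11 z)) m"
      using assms by (simp add: e field_simps)
  qed
qed

lemma kap_step1: "q \<noteq> 0 \<Longrightarrow> kap q r (Suc (Suc n)) = kap q r 1 + (q*r) * kap q r (Suc n)"
  by (simp add: kap_def field_simps)

lemma kap_step2: "q \<noteq> 0 \<Longrightarrow> kap q r (Suc (Suc n)) = kap q r (Suc n) + kap q r 1 * (q*r)^(Suc n)"
  by (simp add: kap_def field_simps)

lemma S1:
  assumes "q \<noteq> 0" "r \<noteq> 0"
  shows "Op q r (replicate (Suc n) X22) (Aop q r X11 y) = (\<lambda>m. Aop q r X11 (Op q r (replicate (Suc n) X22) y) m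
     + kap q r (Suc n) * Aop q r X12 (Aop q r X21 (Op q r (replicate n X22) y)) m)"
proof (induction n)
  case 0
  show ?case using A_rel_swap(6)[OF assms, of y] by (simp add: kap_def)
next
  case (Suc n)
  let ?P = "Op q r (replicate (Suc n) X22) y"
  let ?Q = "Op q r (replicate n X22) y"
  have "Op q r (replicate (Suc (Suc n)) X22) (Aop q r X11 y) = Aop q r X22 (Op q r (replicate (Suc n) X22) (Aop q r X11 y))"
    by simp
  also have "\<dots> = Aop q r X22 (\<lambda>m. 1 * Aop q r X11 ?P m + kap q r (Suc n) * Aop q r X12 (Aop q r X21 ?Q) m)"
    using Suc by simp
  also have "\<dots> = (\<lambda>m. 1 * Aop q r X22 (Aop q r X11 ?P) m + kap q r (Suc n) * Aop q r X22 (Aop q r X12 (Aop q r X21 ?Q)) m)"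
    by (rule lin_Aop[unfolded lin_def, rule_format])
  also have "\<dots> = (\<lambda>m. Aop q r X11 (Aop q r X22 ?P) m + kap q r 1 * Aop q r X12 (Aop q r X21 ?P) m
        + kap q r (Suc n) * ((q*r) * Aop q r X12 (Aop q r X21 (Aop q r X22 ?Q)) m))"
    using assms by (simp add: A_rel_swap(6)[OF assms] H_A22[OF assms] kap_def)
  also have "\<dots> = (\<lambda>m. Aop q r X11 (Op q r (replicate (Suc (Suc n)) X22) y) m
     + kap q r (Suc (Suc n)) * Aop q r X12 (Aop q r X21 (Op q r (replicate (Suc n) X22) y)) m)"
    using assms by (simp add: kap_step1 algebra_simps)
  finally show ?case .
qed

lemma S2:
  assumes "q \<noteq> 0" "r \<noteq> 0"
  shows "Aop q r X22 (Op q r (replicate (Suc n) X11) y) = (\<lambda>m. Op q r (replicate (Suc n) X11) (Aop q r X22 y) m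
     + kap q r (Suc n) * Op q r (replicate n X11) (Aop q r X12 (Aop q r X21 y)) m)"
proof (induction n)
  case 0
  show ?case using A_rel_swap(6)[OF assms, of y] by (simp add: kap_def)
next
  case (Suc n)
  let ?H = "\<lambda>z. Aop q r X12 (Aop q r X21 z)"
  let ?P = "Op q r (replicate (Suc n) X11) y"
  have Hc: "?H (Op q r (replicate k X11) z) = (\<lambda>m. (q*r)^k * Op q r (replicate k X11) (?H z) m)" for k z
  proof -
    have "Op q r (replicate k X11) (?H z) = (\<lambda>m. inverse (q*r)^k * ?H (Op q r (replicate k X11) z) m)"
      by (rule pow_scalar) (rule A11_H[OF assms])
    then show ?thesis using assms by (simp add: fun_eq_iff power_inverse field_simps)
  qed
  have "Aop q r X22 (Op q r (replicate (Suc (Suc n)) X11) y) = Aop q r X22 (Aop q r X11 ?P)"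
    by simp
  also have "\<dots> = (\<lambda>m. Aop q r X11 (Aop q r X22 ?P) m + kap q r 1 * ?H ?P m)"
    using A_rel_swap(6)[OF assms, of ?P] by (simp add: kap_def)
  also have "\<dots> = (\<lambda>m. Aop q r X11 (\<lambda>m. 1 * Op q r (replicate (Suc n) X11) (Aop q r X22 y) m
     + kap q r (Suc n) * Op q r (replicate n X11) (?H y) m) m + kap q r 1 * ?H ?P m)"
    using Suc by simp
  also have "\<dots> = (\<lambda>m. 1 * Aop q r X11 (Op q r (replicate (Suc n) X11) (Aop q r X22 y)) m
     + kap q r (Suc n) * Aop q r X11 (Op q r (replicate n X11) (?H y)) m + kap q r 1 * ?H ?P m)"
    by (simp only: lin_Aop[unfolded lin_def, rule_format])
  also have "\<dots> = (\<lambda>m. Op q r (replicate (Suc (Suc n)) X11) (Aop q r X22 y) m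
     + kap q r (Suc (Suc n)) * Op q r (replicate (Suc n) X11) (?H y) m)"
  proof -
    have Hc': "?H (Aop q r X11 (Op q r (replicate n X11) y)) = (\<lambda>m. (q*r)^(Suc n) * Aop q r X11 (Op q r (replicate n X11) (?H y)) m)"
      using Hc[of "Suc n" y] by simp
    show ?thesis using assms by (simp add: Hc' kap_step2 algebra_simps)
  qed
  finally show ?case .
qed


definition sc :: "nat \<Rightarrow> nat \<times> nat \<times> nat \<times> nat \<Rightarrow> nat \<times> nat \<times> nat \<times> nat" where
  "sc l m = (case m of (a,b,c,d) \<Rightarrow> (l*a, l*b, l*c, l*d))"

lemma pow_l_comm:
  assumes q: "q \<noteq> 0" and r: "r \<noteq> 0" and ql: "q^l = 1" and rl: "r^l = 1" and l: "0 < l"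
  shows "Op q r (replicate l g) (Aop q r h y) = Aop q r h (Op q r (replicate l g) y)"
proof -
  note R = A_rel_swap[OF q r]
  have rq: "(r/q)^l = 1" using ql rl by (simp add: power_divide)
  have iq: "(inverse q)^l = 1" using ql by (simp add: power_inverse)
  have ir: "(inverse r)^l = 1" using rl by (simp add: power_inverse)
  have irq: "(inverse (r/q))^l = 1" using ql rl by (simp add: power_inverse power_divide)
  have kl: "kap q r l = 0" using ql rl by (simp add: kap_def power_mult_distrib)
  obtain n where ln: "l = Suc n" using l by (cases l) auto
  have same: "Op q r (replicate l g) (Aop q r g y) = Aop q r g (Op q r (replicate l g) y)"
  proof -
    have "Op q r (replicate l g) (Aop q r g y) = Op q r (replicate l g @ [g]) y" by (simp add: Op_append)
    also have "\<dots> = Op q r (g # replicate l g) y" by (simp add: replicate_append_same)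
    finally show ?thesis by simp
  qed
  have sI: "\<And>g h s. (\<And>y. Aop q r g (Aop q r h y) = (\<lambda>m. s * Aop q r h (Aop q r g y) m)) \<Longrightarrow> s \<noteq> 0 \<Longrightarrow>
      (\<And>y. Aop q r h (Aop q r g y) = (\<lambda>m. inverse s * Aop q r g (Aop q r h y) m))"
    by (rule swap_inv)
  show ?thesis
  proof (cases g; cases h)
    assume "g = X11" "h = X11" then show ?thesis using same by simp
  next
    assume "g = X11" "h = X12" then show ?thesis
      using pow_comm_scalar[OF sI[OF R(1) q] iq] by simp
  next
    assume "g = X11" "h = X21" then show ?thesis
      using pow_comm_scalar[OF sI[OF R(2) r] ir] by simp
  next
    assume "g = X11" "h = X22" then show ?thesis
      using S2[OF q r, of n y] kl ln by simp
  next
    assume "g = X12" "h = X11" then show ?thesis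
      using pow_comm_scalar[OF R(1) ql] by simp
  next
    assume "g = X12" "h = X12" then show ?thesis using same by simp
  next
    assume "g = X12" "h = X21" then show ?thesis
      using pow_comm_scalar[OF sI[OF R(5)] irq] q r by simp
  next
    assume "g = X12" "h = X22" then show ?thesis
      using pow_comm_scalar[OF sI[OF R(3) r] ir] by simp
  next
    assume "g = X21" "h = X11" then show ?thesis
      using pow_comm_scalar[OF R(2) rl] by simp
  next
    assume "g = X21" "h = X12" then show ?thesis
      using pow_comm_scalar[OF R(5) rq] by simp
  next
    assume "g = X21" "h = X21" then show ?thesis using same by simp
  next
    assume "g = X21" "h = X22" then show ?thesis
      using pow_comm_scalar[OF sI[OF R(4) q] iq] by simp
  next
    assume "g = X22" "h = X11" then show ?thesis
      using S1[OF q r, of n y] kl ln by simp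
  next
    assume "g = X22" "h = X12" then show ?thesis
      using pow_comm_scalar[OF R(3) rl] by simp
  next
    assume "g = X22" "h = X21" then show ?thesis
      using pow_comm_scalar[OF R(4) ql] by simp
  next
    assume "g = X22" "h = X22" then show ?thesis using same by simp
  qed
qed

lemma pow_lk_comm:
  assumes "q \<noteq> 0" "r \<noteq> 0" "q^l = 1" "r^l = 1" "0 < l"
  shows "Op q r (replicate (l*k) g) (Aop q r h y) = Aop q r h (Op q r (replicate (l*k) g) y)"
proof (induction k arbitrary: y)
  case 0 then show ?case by simp
next
  case (Suc k)
  have "replicate (l * Suc k) g = replicate l g @ replicate (l*k) g" by (simp add: replicate_add)
  then show ?case using Suc pow_l_comm[OF assms] by (simp add: Op_append)
qed

lemma wm_sc_comm:
  assumes "q \<noteq> 0" "r \<noteq> 0" "q^l = 1" "r^l = 1" "0 < l"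
  shows "Op q r (wm (sc l m)) (Aop q r h y) = Aop q r h (Op q r (wm (sc l m)) y)"
proof -
  obtain a b c d where m: "m = (a,b,c,d)" by (cases m) auto
  show ?thesis
    by (simp add: m sc_def wm_def Op_append pow_lk_comm[OF assms])
qed


definition Lv :: "'k::field \<Rightarrow> 'k \<Rightarrow> 'k vec \<Rightarrow> 'k vec \<Rightarrow> 'k vec" where
  "Lv q r v y = (\<lambda>m. \<Sum>m0\<in>{m. v m \<noteq> 0}. v m0 * Op q r (wm m0) y m)"

lemma Lv_d0: "finite {m. v m \<noteq> 0} \<Longrightarrow> Lv q r v d0 = v"
proof (rule ext)
  fix m assume f: "finite {m. v m \<noteq> 0}"
  have "Lv q r v d0 m = (\<Sum>m0\<in>{m. v m \<noteq> 0}. if m0 = m then v m else 0)"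
    unfolding Lv_def by (rule sum.cong[OF refl]) (simp only: Op_wm, simp add: dl_def)
  also have "\<dots> = v m" using f by (simp add: sum.delta')
  finally show "Lv q r v d0 m = v m" .
qed

lemma A_d0_R: "Aop q r h d0 = Rop q r h d0"
proof (rule ext, clarify)
  fix a b c d
  show "Aop q r h d0 (a,b,c,d) = Rop q r h d0 (a,b,c,d)"
    by (cases h; cases a; cases b; cases c; cases d; simp add: Aop_def Rop_def dl_def)
qed

lemma Op_Rop: "q \<noteq> 0 \<Longrightarrow> r \<noteq> 0 \<Longrightarrow> Op q r w (Rop q r h y) = Rop q r h (Op q r w y)"
  by (induction w) (auto simp: AR_comm)

lemma Lv_Rop:
  assumes "q \<noteq> 0" "r \<noteq> 0" "finite {m. v m \<noteq> 0}"
  shows "Lv q r v (Rop q r h y) = Rop q r h (Lv q r v y)"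
proof -
  have "Lv q r v (Rop q r h y) = (\<lambda>m. \<Sum>m0\<in>{m. v m \<noteq> 0}. v m0 * Rop q r h (Op q r (wm m0) y) m)"
    unfolding Lv_def by (simp add: Op_Rop[OF assms(1,2)])
  also have "\<dots> = Rop q r h (Lv q r v y)"
    unfolding Lv_def by (rule lin_sum[OF lin_Rop assms(3), symmetric])
  finally show ?thesis .
qed

lemma AR_v:
  assumes "q \<noteq> 0" "r \<noteq> 0" "finite {m. v m \<noteq> 0}"
    and c: "\<And>h y. Lv q r v (Aop q r h y) = Aop q r h (Lv q r v y)"
  shows "Aop q r h v = Rop q r h v"
proof -
  have "Aop q r h v = Aop q r h (Lv q r v d0)" using Lv_d0[OF assms(3)] by simp
  also have "\<dots> = Lv q r v (Aop q r h d0)" by (simp add: c)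
  also have "\<dots> = Lv q r v (Rop q r h d0)" by (simp add: A_d0_R)
  also have "\<dots> = Rop q r h (Lv q r v d0)" by (rule Lv_Rop[OF assms(1-3)])
  also have "\<dots> = Rop q r h v" using Lv_d0[OF assms(3)] by simp
  finally show ?thesis .
qed

lemma Zeqs:
  assumes "q \<noteq> 0" "r \<noteq> 0" "finite {m. v m \<noteq> 0}"
    and c: "\<And>h y. Lv q r v (Aop q r h y) = Aop q r h (Lv q r v y)"
    and nz: "v (a,b,c,d) \<noteq> 0" and mx: "\<And>x y z w. v (x,y,z,w) \<noteq> 0 \<Longrightarrow> x \<le> a"
  shows "q^a = r^d * (r/q)^c" "r^a * (r/q)^b = q^d" "1 = q^b * r^c" "r^b * q^c = 1"
proof -
  note E = AR_v[OF assms(1-3) c]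
  have z: "v (Suc a, x, y, z) = 0" for x y z using mx[of "Suc a" x y z] by force
  have "Aop q r X12 v (a, Suc b, c, d) = Rop q r X12 v (a, Suc b, c, d)" using E by simp
  then have "q^a * v (a,b,c,d) = (r^d * (r/q)^c) * v (a,b,c,d)" by (simp add: Aop_def Rop_def)
  then show "q^a = r^d * (r/q)^c" using nz by simp
  have "Aop q r X21 v (a, b, Suc c, d) = Rop q r X21 v (a, b, Suc c, d)" using E by simp
  then have "(r^a * (r/q)^b) * v (a,b,c,d) = q^d * v (a,b,c,d)" by (simp add: Aop_def Rop_def)
  then show "r^a * (r/q)^b = q^d" using nz by simp
  have "Aop q r X11 v (Suc a, b, c, d) = Rop q r X11 v (Suc a, b, c, d)" using E by simp
  then have "1 * v (a,b,c,d) = (q^b * r^c) * v (a,b,c,d)" by (cases b; cases c; simp add: Aop_def Rop_def z)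
  then show "1 = q^b * r^c" using nz by (simp only: mult_cancel_right) simp
  have "Aop q r X22 v (a, b, c, Suc d) = Rop q r X22 v (a, b, c, Suc d)" using E by simp
  then have "(r^b * q^c) * v (a,b,c,d) = 1 * v (a,b,c,d)" by (cases b; cases c; simp add: Aop_def Rop_def z)
  then show "r^b * q^c = 1" using nz by (simp only: mult_cancel_right) simp
qed

lemma pow_swap: "((x::'a::field)^a)^b = (x^b)^a"
  by (metis power_mult mult.commute)

lemma NT_a:
  assumes Q: "\<forall>k. q^k = 1 \<longrightarrow> n1 dvd k" and R: "\<forall>k. r^k = 1 \<longrightarrow> n2 dvd k"
    and q1: "q^n1 = (1::'a::field)" and r1: "r^n2 = 1" and cop: "coprime n1 n2"
    and e: "q^x = r^y"
  shows "n1 dvd x \<and> n2 dvd y"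
proof
  have "q^(x*n2) = (q^x)^n2" by (rule power_mult)
  also have "\<dots> = (r^y)^n2" using e by simp
  also have "\<dots> = (r^n2)^y" by (rule pow_swap)
  also have "\<dots> = 1" using r1 by simp
  finally have "n1 dvd x*n2" by (rule Q[rule_format])
  then show "n1 dvd x" using cop by (simp add: coprime_dvd_mult_left_iff)
  have "r^(y*n1) = (r^y)^n1" by (rule power_mult)
  also have "\<dots> = (q^x)^n1" using e by simp
  also have "\<dots> = (q^n1)^x" by (rule pow_swap)
  also have "\<dots> = 1" using q1 by simp
  finally have "n2 dvd y*n1" by (rule R[rule_format])
  then show "n2 dvd y" using cop by (simp add: coprime_dvd_mult_left_iff coprime_commute)
qed

lemma NT_b:
  assumes Q: "\<forall>k. q^k = 1 \<longrightarrow> n1 dvd k" and R: "\<forall>k. r^k = 1 \<longrightarrow> n2 dvd k"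
    and q1: "q^n1 = (1::'a::field)" and r1: "r^n2 = 1" and cop: "coprime n1 n2"
    and e: "q^x * r^y = 1"
  shows "n1 dvd x \<and> n2 dvd y"
proof
  have "q^(x*n2) = (q^x)^n2" by (rule power_mult)
  also have "\<dots> = (q^x)^n2 * (r^n2)^y" using r1 by simp
  also have "\<dots> = (q^x)^n2 * (r^y)^n2" by (subst pow_swap[of r n2 y]) (rule refl)
  also have "\<dots> = (q^x * r^y)^n2" by (rule power_mult_distrib[symmetric])
  also have "\<dots> = 1" using e by simp
  finally have "n1 dvd x*n2" by (rule Q[rule_format])
  then show "n1 dvd x" using cop by (simp add: coprime_dvd_mult_left_iff)
  have "r^(y*n1) = (r^y)^n1" by (rule power_mult)
  also have "\<dots> = (q^n1)^x * (r^y)^n1" using q1 by simp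
  also have "\<dots> = (q^x)^n1 * (r^y)^n1" by (subst pow_swap[of q n1 x]) (rule refl)
  also have "\<dots> = (q^x * r^y)^n1" by (rule power_mult_distrib[symmetric])
  also have "\<dots> = 1" using e by simp
  finally have "n2 dvd y*n1" by (rule R[rule_format])
  then show "n2 dvd y" using cop by (simp add: coprime_dvd_mult_left_iff coprime_commute)
qed


lemma e12: "q \<noteq> 0 \<Longrightarrow> q^a = r^d * (r/q)^c \<Longrightarrow> q^(a+c) = (r::'k::field)^(c+d)"
  by (simp add: power_add power_divide field_simps)

lemma e21: "q \<noteq> 0 \<Longrightarrow> r^a * (r/q)^b = q^d \<Longrightarrow> q^(b+d) = (r::'k::field)^(a+b)"
  by (simp add: power_add power_divide field_simps)

lemma Zall:
  fixes q r :: "'k::field"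
  assumes q0: "q \<noteq> 0" and r0: "r \<noteq> 0"
    and Q: "\<forall>k. q^k = 1 \<longrightarrow> n1 dvd k" and R: "\<forall>k. r^k = 1 \<longrightarrow> n2 dvd k"
    and q1: "q^n1 = 1" and r1: "r^n2 = 1" and cop: "coprime n1 n2"
    and ql: "q^l = 1" and rl: "r^l = 1" and lpos: "0 < l" and ldef: "l = lcm n1 n2"
  shows "finite {m. v m \<noteq> 0} \<Longrightarrow> (\<forall>h y. Lv q r v (Aop q r h y) = Aop q r h (Lv q r v y)) \<Longrightarrow> v m \<noteq> 0
     \<Longrightarrow> \<exists>m'. m = sc l m'"
proof (induction "card {m. v m \<noteq> 0}" arbitrary: v rule: less_induct)
  case less
  let ?S = "{m. v m \<noteq> 0}"
  have fS: "finite ?S" by (rule less.prems(1))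
  have mS: "m \<in> ?S" using less.prems(3) by simp
  then have ne: "?S \<noteq> {}" by blast
  define a0 where "a0 = Max (fst ` ?S)"
  have "a0 \<in> fst ` ?S" using ne fS unfolding a0_def by (intro Max_in) auto
  then obtain m0 where m0: "v m0 \<noteq> 0" "fst m0 = a0" by auto
  have mx: "x \<le> a0" if "v (x,y,z,w) \<noteq> 0" for x y z w
  proof -
    have "x \<in> fst ` ?S" using that by force
    then show ?thesis unfolding a0_def using fS by (intro Max_ge) auto
  qed
  obtain b0 c0 d1 where m0e: "m0 = (a0,b0,c0,d1)" using m0(2) by (cases m0) auto
  have cm: "\<And>h y. Lv q r v (Aop q r h y) = Aop q r h (Lv q r v y)" using less.prems(2) by blast
  note EQ = Zeqs[OF q0 r0 fS cm, of a0 b0 c0 d1, OF m0(1)[unfolded m0e] mx]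
  have E12: "q^(a0+c0) = r^(c0+d1)" by (rule e12[OF q0 EQ(1)])
  have E21: "q^(b0+d1) = r^(a0+b0)" by (rule e21[OF q0 EQ(2)])
  have E11: "q^b0 * r^c0 = 1" using EQ(3) by simp
  have E22: "q^c0 * r^b0 = 1" using EQ(4) by (simp add: mult.commute)
  note NA = NT_a[OF Q R q1 r1 cop] and NB = NT_b[OF Q R q1 r1 cop]
  have d1: "n1 dvd b0" "n2 dvd c0" using NB[OF E11] by auto
  have d2: "n1 dvd c0" "n2 dvd b0" using NB[OF E22] by auto
  have d3: "n1 dvd a0 + c0" "n2 dvd c0 + d1" using NA[OF E12] by auto
  have d4: "n1 dvd b0 + d1" "n2 dvd a0 + b0" using NA[OF E21] by auto
  have "n1 dvd a0" using d3(1) d2(1) by (simp add: dvd_add_left_iff)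
  moreover have "n1 dvd d1" using d4(1) d1(1) by (simp add: dvd_add_right_iff)
  moreover have "n2 dvd a0" using d4(2) d2(2) by (simp add: dvd_add_left_iff)
  moreover have "n2 dvd d1" using d3(2) d1(2) by (simp add: dvd_add_right_iff)
  ultimately have L: "l dvd a0" "l dvd b0" "l dvd c0" "l dvd d1"
    using d1 d2 unfolding ldef by (auto intro: lcm_least)
  have m0sc: "m0 = sc l (a0 div l, b0 div l, c0 div l, d1 div l)"
    using L by (simp add: m0e sc_def)
  have comm0: "Op q r (wm m0) (Aop q r h y) = Aop q r h (Op q r (wm m0) y)" for h y
    unfolding m0sc by (rule wm_sc_comm[OF q0 r0 ql rl lpos])
  show ?case
  proof (cases "m = m0")
    case True then show ?thesis using m0sc by blast
  next
    case False
    define v' where "v' = v(m0 := 0)"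
    have S': "{m. v' m \<noteq> 0} = ?S - {m0}" unfolding v'_def by auto
    have fS': "finite {m. v' m \<noteq> 0}" using fS S' by simp
    have card: "card {m. v' m \<noteq> 0} < card ?S"
      unfolding S' by (rule card_Diff1_less[OF fS]) (simp add: m0(1))
    have Lv': "Lv q r v' y = (\<lambda>m. 1 * Lv q r v y m + (- v m0) * Op q r (wm m0) y m)" for y
    proof (rule ext)
      fix m
      have "Lv q r v y m = v m0 * Op q r (wm m0) y m + (\<Sum>x\<in>?S - {m0}. v x * Op q r (wm x) y m)"
        unfolding Lv_def using fS m0(1) by (simp add: sum.remove)
      moreover have "Lv q r v' y m = (\<Sum>x\<in>?S - {m0}. v x * Op q r (wm x) y m)"
        unfolding Lv_def S' by (rule sum.cong) (auto simp: v'_def)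
      ultimately show "Lv q r v' y m = 1 * Lv q r v y m + (- v m0) * Op q r (wm m0) y m" by simp
    qed
    have cm': "\<forall>h y. Lv q r v' (Aop q r h y) = Aop q r h (Lv q r v' y)"
    proof (intro allI)
      fix h y
      have "Lv q r v' (Aop q r h y) = (\<lambda>m. 1 * Aop q r h (Lv q r v y) m + (- v m0) * Aop q r h (Op q r (wm m0) y) m)"
        by (simp add: Lv' cm comm0)
      also have "\<dots> = Aop q r h (\<lambda>m. 1 * Lv q r v y m + (- v m0) * Op q r (wm m0) y m)"
        by (rule lin_Aop[unfolded lin_def, rule_format, symmetric])
      also have "\<dots> = Aop q r h (Lv q r v' y)" by (simp add: Lv')
      finally show "Lv q r v' (Aop q r h y) = Aop q r h (Lv q r v' y)" .
    qed
    have "v' m \<noteq> 0" using less.prems(3) False by (simp add: v'_def)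
    then show ?thesis using less.hyps[OF card fS' cm'] by blast
  qed
qed


lemma P1:
  assumes "p12 \<noteq> 0" "lam \<noteq> 0" "fin_supp f"
  shows "qm_ideal lam p12 (\<lambda>x. f x - Ev (T p12 (lam * inverse p12) f d0) x)"
proof -
  let ?r = "lam * inverse p12"
  let ?G = "{w. f w \<noteq> 0}"
  have fG: "finite ?G" using assms(3) by (simp add: fin_supp_def)
  have "qm_ideal lam p12 (\<lambda>x. \<Sum>w\<in>?G. f w * (fa_word w x - Ev (Op p12 ?r w d0) x))"
    by (rule ideal_sum[OF fG]) (auto intro: span_word[OF assms(1,2)])
  then show ?thesis
  proof (rule ideal_cong)
    fix x
    have a: "f x = (\<Sum>w\<in>?G. f w * fa_word w x)" by (rule fin_expand[OF assms(3)])
    have b: "Ev (T p12 ?r f d0) x = (\<Sum>w\<in>?G. f w * Ev (Op p12 ?r w d0) x)"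
      by (simp add: Ev_def T_def sum_distrib_left)
    show "f x - Ev (T p12 ?r f d0) x = (\<Sum>w\<in>?G. f w * (fa_word w x - Ev (Op p12 ?r w d0) x))"
      unfolding a b by (simp add: sum_subtractf right_diff_distrib)
  qed
qed

lemma P2:
  assumes "p12 \<noteq> 0" "lam \<noteq> 0" "fin_supp f" "fin_supp g"
    and e: "T p12 (lam * inverse p12) f d0 = T p12 (lam * inverse p12) g d0"
  shows "qm_eq lam p12 f g"
proof -
  let ?v = "T p12 (lam * inverse p12) f d0"
  have "qm_ideal lam p12 (\<lambda>x. 1 * (f x - Ev ?v x) + (-1) * (g x - Ev ?v x))"
    by (rule ideal_comb[OF P1[OF assms(1,2,3)]]) (use P1[OF assms(1,2,4)] e in simp)
  then show ?thesis unfolding qm_eq_def by (rule ideal_cong) (simp add: fa_diff_def)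
qed

lemma P3:
  assumes "p12 \<noteq> 0" "lam \<noteq> 0" "fin_supp f" "fin_supp g" "qm_eq lam p12 f g"
  shows "T p12 (lam * inverse p12) f y = T p12 (lam * inverse p12) g y"
proof (rule ext)
  fix m
  have "T p12 (lam * inverse p12) (fa_diff f g) y = (\<lambda>m. 0)"
    using T_ideal[OF assms(1,2)] assms(5) unfolding qm_eq_def by blast
  moreover have "fa_diff f g = (\<lambda>w. f w - 1 * g w)" by (simp add: fa_diff_def fun_eq_iff)
  ultimately have "T p12 (lam * inverse p12) (\<lambda>w. f w - 1 * g w) y m = 0" by simp
  then show "T p12 (lam * inverse p12) f y m = T p12 (lam * inverse p12) g y m"
    using T_diff2[OF assms(3,4), of p12 "lam * inverse p12" 1 y m] by simp
qed

lemma Ev_fin: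
  assumes "p12 \<noteq> 0" "lam \<noteq> 0" "fin_supp f"
  shows "fin_supp (Ev (T p12 (lam * inverse p12) f d0))"
proof -
  let ?E = "Ev (T p12 (lam * inverse p12) f d0)"
  have "fin_supp (\<lambda>x. 1 * f x + (-1) * (f x - ?E x))"
    by (rule fin_supp_comb2[OF assms(3) ideal_fin[OF P1[OF assms]]])
  moreover have "(\<lambda>x. 1 * f x + (-1) * (f x - ?E x)) = ?E" by (simp add: fun_eq_iff)
  ultimately show ?thesis by simp
qed

lemma supp_fin: "fin_supp (Ev v) \<Longrightarrow> finite {m. v m \<noteq> 0}"
proof -
  assume a: "fin_supp (Ev v)"
  have "{m. v m \<noteq> 0} \<subseteq> cnt ` {x. Ev v x \<noteq> 0}"
  proof
    fix m assume "m \<in> {m. v m \<noteq> 0}"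
    then have "Ev v (wm m) \<noteq> 0" by (simp add: Ev_def sorted_wm cnt_wm)
    then show "m \<in> cnt ` {x. Ev v x \<noteq> 0}" by (metis (mono_tags) cnt_wm image_eqI mem_Collect_eq)
  qed
  moreover have "finite (cnt ` {x. Ev v x \<noteq> 0})" using a by (simp add: fin_supp_def)
  ultimately show ?thesis by (rule finite_subset)
qed

lemma T_Ev:
  assumes "finite {m. v m \<noteq> 0}"
  shows "T q r (Ev v) y = Lv q r v y"
proof (rule ext)
  fix m
  let ?S = "{m. v m \<noteq> 0}"
  have "T q r (Ev v) y m = (\<Sum>x\<in>wm ` ?S. Ev v x * Op q r x y m)"
  proof (rule T_sup)
    show "finite (wm ` ?S)" using assms by simp
    show "{w. Ev v w \<noteq> 0} \<subseteq> wm ` ?S"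
    proof
      fix x assume "x \<in> {w. Ev v w \<noteq> 0}"
      then have s: "sorted (map rank x)" and nz: "v (cnt x) \<noteq> 0" by (auto simp: Ev_def split: if_splits)
      have "x = wm (cnt x)" using wm_cnt[OF s] by simp
      then show "x \<in> wm ` ?S" using nz by blast
    qed
  qed
  also have "\<dots> = (\<Sum>m0\<in>?S. Ev v (wm m0) * Op q r (wm m0) y m)"
  proof (rule sum.reindex_cong[of wm])
    show "inj_on wm ?S" by (rule inj_onI) (rule wm_inj)
  qed auto
  also have "\<dots> = Lv q r v y m" unfolding Lv_def by (simp add: Ev_def sorted_wm cnt_wm)
  finally show "T q r (Ev v) y m = Lv q r v y m" .
qed

lemma Tf_Lv:
  assumes "p12 \<noteq> 0" "lam \<noteq> 0" "fin_supp f"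
  shows "T p12 (lam * inverse p12) f y = Lv p12 (lam * inverse p12) (T p12 (lam * inverse p12) f d0) y"
proof -
  let ?v = "T p12 (lam * inverse p12) f d0"
  have fE: "fin_supp (Ev ?v)" by (rule Ev_fin[OF assms])
  have "qm_eq lam p12 f (Ev ?v)" unfolding qm_eq_def
    by (rule ideal_cong[OF P1[OF assms]]) (simp add: fa_diff_def)
  then have "T p12 (lam * inverse p12) f y = T p12 (lam * inverse p12) (Ev ?v) y"
    by (rule P3[OF assms fE])
  also have "\<dots> = Lv p12 (lam * inverse p12) ?v y" by (rule T_Ev[OF supp_fin[OF fE]])
  finally show ?thesis .
qed

lemma fa_pow_word: "fa_pow (fa_word u :: 'k::comm_ring_1 falg) n = fa_word (concat (replicate n u))"
proof (induction n)
  case 0 then show ?case by (simp add: fa_pow_def fa_one_def)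
next
  case (Suc n)
  have "fa_pow (fa_word u :: 'k falg) (Suc n) = fa_mult (fa_word u) (fa_pow (fa_word u) n)"
    by (simp add: fa_pow_def)
  also have "\<dots> = fa_mult (fa_word u) (fa_word (concat (replicate n u)))" using Suc by simp
  also have "\<dots> = fa_word (u @ concat (replicate n u))" by (rule fa_mult_word_word)
  finally show ?case by simp
qed

lemma concat_rep1: "concat (replicate n [g]) = replicate n g"
  by (induction n) auto

lemma concat_rep2: "concat (replicate a (replicate l g)) = replicate (l*a) g"
  by (induction a) (auto simp: replicate_add)

lemma ymon_eq: "ymon l m = fa_word (wm (sc l m))"
proof -
  obtain a b c d where m: "m = (a,b,c,d)" by (cases m) auto
  have p: "fa_pow (fa_pow (fa_gen g) l) k = fa_word (replicate (l*k) g)" for g k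
    by (simp add: fa_gen_def fa_pow_word concat_rep1 concat_rep2)
  show ?thesis by (simp add: m ymon_def p fa_mult_word_word wm_def sc_def)
qed

lemma ycomb_eq: "ycomb l S c = (\<lambda>w. \<Sum>m\<in>S. c m * fa_word (wm (sc l m)) w)"
  by (simp add: ycomb_def ymon_eq)

lemma mord_props:
  assumes "\<exists>n>0. a ^ n = (1::'k::field)"
  shows "0 < mord a \<and> a ^ mord a = 1 \<and> (\<forall>k. a^k = 1 \<longrightarrow> mord a dvd k)"
proof -
  have L: "0 < mord a \<and> a ^ mord a = 1" unfolding mord_def using assms by (rule LeastI_ex)
  have "mord a dvd k" if k: "a^k = 1" for k
  proof (rule ccontr)
    assume nd: "\<not> mord a dvd k"
    let ?j = "k mod mord a"
    have j0: "0 < ?j" using nd by (simp add: dvd_eq_mod_eq_0)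
    have jl: "?j < mord a" using L by simp
    have "a^k = a^(mord a * (k div mord a) + ?j)" by simp
    also have "\<dots> = (a^mord a)^(k div mord a) * a^?j" by (simp only: power_add power_mult)
    finally have "a^k = (a^mord a)^(k div mord a) * a^?j" .
    then have "a^?j = 1" using k L by simp
    then have "0 < ?j \<and> a^?j = 1" using j0 by simp
    then have "mord a \<le> ?j" unfolding mord_def by (rule Least_le)
    then show False using jl by simp
  qed
  then show ?thesis using L by blast
qed

lemma sc_inj: "0 < l \<Longrightarrow> sc l m = sc l m' \<Longrightarrow> m = m'"
  by (cases m; cases m') (auto simp: sc_def)


lemma T_ycomb:
  "finite S \<Longrightarrow> T q r (ycomb l S c) y m = (\<Sum>m0\<in>S. c m0 * Op q r (wm (sc l m0)) y m)"
  unfolding ycomb_eq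
  by (subst T_lincomb) (auto simp: fin_supp_word T_word)

lemma fin_ycomb: "finite S \<Longrightarrow> fin_supp (ycomb l S (c :: _ \<Rightarrow> 'k::field))"
  unfolding ycomb_eq by (rule fin_supp_lincomb) (auto simp: fin_supp_word)

lemma T_comm_Op:
  assumes "\<And>h y. T q r f (Aop q r h y) = Aop q r h (T q r f y)"
  shows "T q r f (Op q r w y) = Op q r w (T q r f y)"
  by (induction w) (auto simp: assms)

theorem mainTheorem2:
  fixes lam p12 :: "'k::field_char_0"
  assumes alg_closed: "\<And>q :: 'k poly. 0 < degree q \<Longrightarrow> \<exists>z. poly q z = 0"
    and lam_nz: "lam \<noteq> 0" and p12_nz: "p12 \<noteq> 0"
    and lam_sq: "lam ^ 2 \<noteq> 1"
    and root1: "\<exists>n>0. p12 ^ n = (1::'k)"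
    and root2: "\<exists>n>0. (lam * inverse p12) ^ n = (1::'k)"
    and cop: "coprime (mord p12) (mord (lam * inverse p12))"
    and l_def: "l = lcm (mord p12) (mord (lam * inverse p12))"
  shows "(\<forall>f. fin_supp f \<longrightarrow>
            (qm_central lam p12 f \<longleftrightarrow>
              (\<exists>S c. finite S \<and> qm_eq lam p12 f (ycomb l S c))))
       \<and> (\<forall>S (c :: nat \<times> nat \<times> nat \<times> nat \<Rightarrow> 'k). finite S \<longrightarrow>
            qm_eq lam p12 (ycomb l S c) (\<lambda>w. 0) \<longrightarrow> (\<forall>m\<in>S. c m = 0))"
proof -
  define q where "q = p12"
  define r where "r = lam * inverse p12"
  define n1 where "n1 = mord q"
  define n2 where "n2 = mord r"
  have q0: "q \<noteq> 0" using p12_nz by (simp add: q_def)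
  have r0: "r \<noteq> 0" using p12_nz lam_nz by (simp add: r_def)
  note M1 = mord_props[OF root1, folded q_def, folded n1_def]
  note M2 = mord_props[OF root2, folded r_def, folded n2_def]
  have copn: "coprime n1 n2" using cop by (simp add: n1_def n2_def q_def r_def)
  have ll: "l = lcm n1 n2" using l_def by (simp add: n1_def n2_def q_def r_def)
  have lpos: "0 < l" using M1 M2 ll by (simp add: lcm_pos_nat)
  have ql: "q^l = 1"
  proof -
    obtain k where "l = n1 * k" using ll by (metis dvd_lcm1 dvdE)
    then show ?thesis using M1 by (simp add: power_mult)
  qed
  have rl: "r^l = 1"
  proof -
    obtain k where "l = n2 * k" using ll by (metis dvd_lcm2 dvdE)
    then show ?thesis using M2 by (simp add: power_mult)
  qed
  have wcomm: "Op q r (wm (sc l m)) (Aop q r h y) = Aop q r h (Op q r (wm (sc l m)) y)" for m h y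
    by (rule wm_sc_comm[OF q0 r0 ql rl lpos])
  have Tw: "T q r (fa_word (wm (sc l m))) d0 = dl (sc l m)" for m
    by (simp add: T_word Op_wm)
  have TY: "T q r (ycomb l S c) d0 m' = (\<Sum>m0\<in>S. c m0 * dl (sc l m0) m')" if "finite S" for S c m'
    using T_ycomb[OF that, of q r l c d0 m'] by (simp add: Op_wm)
  have part2: "\<forall>S (c :: nat \<times> nat \<times> nat \<times> nat \<Rightarrow> 'k). finite S \<longrightarrow>
            qm_eq lam p12 (ycomb l S c) (\<lambda>w. 0) \<longrightarrow> (\<forall>m\<in>S. c m = 0)"
  proof (intro allI impI ballI)
    fix S and c :: "nat \<times> nat \<times> nat \<times> nat \<Rightarrow> 'k" and m0
    assume fS: "finite S" and e: "qm_eq lam p12 (ycomb l S c) (\<lambda>w. 0)" and m0: "m0 \<in> S"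
    have z: "fin_supp (\<lambda>w. 0 :: 'k)" by (simp add: fin_supp_def)
    have "T q r (ycomb l S c) d0 = T q r (\<lambda>w. 0) d0"
      unfolding q_def r_def by (rule P3[OF p12_nz lam_nz fin_ycomb[OF fS] z e])
    then have "T q r (ycomb l S c) d0 (sc l m0) = 0" by (simp add: T_zero)
    then have "(\<Sum>m\<in>S. c m * dl (sc l m) (sc l m0)) = 0" using TY[OF fS] by simp
    moreover have "(\<Sum>m\<in>S. c m * dl (sc l m) (sc l m0)) = (\<Sum>m\<in>S. if m = m0 then c m0 else 0)"
      by (rule sum.cong) (auto simp: dl_def dest: sc_inj[OF lpos])
    ultimately show "c m0 = 0" using fS m0 by simp
  qed
  have part1: "qm_central lam p12 f \<longleftrightarrow> (\<exists>S c. finite S \<and> qm_eq lam p12 f (ycomb l S c))"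
    if ff: "fin_supp f" for f
  proof
    assume cen: "qm_central lam p12 f"
    have fg: "fin_supp (fa_gen h :: 'k falg)" for h by (simp add: fa_gen_def fin_supp_word)
    have cm: "T q r f (Aop q r h y) = Aop q r h (T q r f y)" for h y
    proof -
      have e: "qm_eq lam p12 (fa_mult f (fa_gen h)) (fa_mult (fa_gen h) f)"
        using cen fg unfolding qm_central_def by blast
      have "T q r (fa_mult f (fa_gen h)) y = T q r (fa_mult (fa_gen h) f) y"
        unfolding q_def r_def
        by (rule P3[OF p12_nz lam_nz fin_supp_mult[OF ff fg] fin_supp_mult[OF fg ff] e])
      then show ?thesis by (simp add: fa_gen_def T_right_word[OF ff] T_left_word[OF ff])
    qed
    define v where "v = T q r f d0"
    have fv: "finite {m. v m \<noteq> 0}" unfolding v_def q_def r_def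
      by (rule supp_fin[OF Ev_fin[OF p12_nz lam_nz ff]])
    have TL: "T q r f y = Lv q r v y" for y unfolding v_def q_def r_def by (rule Tf_Lv[OF p12_nz lam_nz ff])
    have cmL: "\<forall>h y. Lv q r v (Aop q r h y) = Aop q r h (Lv q r v y)" using cm TL by simp
    have good: "\<exists>m'. m = sc l m'" if "v m \<noteq> 0" for m
      by (rule Zall[OF q0 r0 _ _ M1[THEN conjunct2, THEN conjunct1] M2[THEN conjunct2, THEN conjunct1] copn ql rl lpos ll fv cmL that])
        (use M1 M2 in blast)+
    define S where "S = sc l -` {m. v m \<noteq> 0}"
    define c where "c = (\<lambda>m. v (sc l m))"
    have injsc: "inj (sc l)" by (rule injI) (rule sc_inj[OF lpos])
    have fS: "finite S" unfolding S_def using fv injsc by (rule finite_vimageI)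
    have "T q r (ycomb l S c) d0 = v"
    proof (rule ext)
      fix m'
      show "T q r (ycomb l S c) d0 m' = v m'"
      proof (cases "\<exists>m0. m' = sc l m0")
        case True
        then obtain m0 where m0: "m' = sc l m0" by blast
        have "T q r (ycomb l S c) d0 m' = (\<Sum>m\<in>S. if m = m0 then c m0 else 0)"
          unfolding TY[OF fS] m0 by (rule sum.cong) (auto simp: dl_def dest: sc_inj[OF lpos])
        also have "\<dots> = v m'" using fS by (auto simp: m0 c_def S_def)
        finally show ?thesis .
      next
        case False
        then have "v m' = 0" using good by blast
        moreover have "T q r (ycomb l S c) d0 m' = 0"
          unfolding TY[OF fS] using False by (auto simp: dl_def intro!: sum.neutral)
        ultimately show ?thesis by simp
      qed
    qed
    then have "qm_eq lam p12 f (ycomb l S c)"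
      unfolding v_def q_def r_def
      by (intro P2[OF p12_nz lam_nz ff fin_ycomb[OF fS]]) simp
    then show "\<exists>S c. finite S \<and> qm_eq lam p12 f (ycomb l S c)" using fS by blast
  next
    assume "\<exists>S c. finite S \<and> qm_eq lam p12 f (ycomb l S c)"
    then obtain S c where fS: "finite S" and e: "qm_eq lam p12 f (ycomb l S c)" by blast
    have TY': "T q r f y = T q r (ycomb l S c) y" for y
      unfolding q_def r_def by (rule P3[OF p12_nz lam_nz ff fin_ycomb[OF fS] e])
    have Ty: "T q r (ycomb l S c) y = (\<lambda>m. \<Sum>m0\<in>S. c m0 * Op q r (wm (sc l m0)) y m)" for y
      by (rule ext) (rule T_ycomb[OF fS])
    have cm: "T q r f (Aop q r h y) = Aop q r h (T q r f y)" for h y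
    proof -
      have "T q r f (Aop q r h y) = (\<lambda>m. \<Sum>m0\<in>S. c m0 * Aop q r h (Op q r (wm (sc l m0)) y) m)"
        by (simp add: TY' Ty wcomm)
      also have "\<dots> = Aop q r h (\<lambda>m. \<Sum>m0\<in>S. c m0 * Op q r (wm (sc l m0)) y m)"
        by (rule lin_sum[OF lin_Aop fS, symmetric])
      also have "\<dots> = Aop q r h (T q r f y)"
        by (simp add: TY' Ty)
      finally show ?thesis .
    qed
    show "qm_central lam p12 f" unfolding qm_central_def
    proof (intro allI impI)
      fix g :: "'k falg" assume fg: "fin_supp g"
      let ?G = "{w. g w \<noteq> 0}"
      have fG: "finite ?G" using fg by (simp add: fin_supp_def)
      have "T q r (fa_mult f g) d0 = T q r f (T q r g d0)" by (rule T_mult[OF ff fg])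
      also have "\<dots> = T q r f (\<lambda>m. \<Sum>w\<in>?G. g w * Op q r w d0 m)" by (simp add: T_def)
      also have "\<dots> = (\<lambda>m. \<Sum>w\<in>?G. g w * T q r f (Op q r w d0) m)" by (rule lin_sum[OF lin_T fG])
      also have "\<dots> = (\<lambda>m. \<Sum>w\<in>?G. g w * Op q r w (T q r f d0) m)" by (simp add: T_comm_Op[OF cm])
      also have "\<dots> = T q r g (T q r f d0)" by (simp add: T_def)
      also have "\<dots> = T q r (fa_mult g f) d0" by (rule T_mult[OF fg ff, symmetric])
      finally have "T q r (fa_mult f g) d0 = T q r (fa_mult g f) d0" .
      then show "qm_eq lam p12 (fa_mult f g) (fa_mult g f)"
        unfolding q_def r_def
        by (rule P2[OF p12_nz lam_nz fin_supp_mult[OF ff fg] fin_supp_mult[OF fg ff]])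
    qed
  qed
  show ?thesis using part1 part2 by blast
qed


end
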